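(* Let $(M,g)$ be a space-time of dimension $4$ admitting a time-like unit vector field $u$ ($u_ku^k=-1$) with $\nabla_iu_j=\varphi\,(g_{ij}+u_iu_j)$ for some scalar field $\varphi$. Let $C_{abcd}$ be the Weyl tensor and $E_{ad}=u^bu^cC_{abcd}$. Then $C_{abcd}=0$ if and only if $E_{ab}=0$.
   Context: $\nabla$ is the Levi-Civita connection; indices are raised and lowered with $g$. *)

theory Defs
  imports "HOL-Analysis.Analysis"
begin

text \<open>Points of a coordinate chart are points of an open set U of real^4; indices range
  over the 4-element type 4.  All tensors are given by their components.\<close>

type_synonym pt = "real^4"
type_synonym sfield = "pt \<Rightarrow> real"

definition partial :: "4 \<Rightarrow> sfield \<Rightarrow> sfield" where
  "partial k f x = deriv (\<lambda>t. f (x + t *\<^sub>R axis k 1)) 0"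

fun iter_partial :: "4 list \<Rightarrow> sfield \<Rightarrow> sfield" where
  "iter_partial [] f = f"
| "iter_partial (k # ks) f = partial k (iter_partial ks f)"

definition smooth_on :: "pt set \<Rightarrow> sfield \<Rightarrow> bool" where
  "smooth_on U f \<longleftrightarrow> (\<forall>ks. \<forall>x\<in>U. iter_partial ks f differentiable (at x))"

text \<open>Lorentzian signature (-,+,+,+) via Sylvester normal form.\<close>
definition minkowski :: "real^4^4" where
  "minkowski = (\<chi> i j. if i = j then (if i = 0 then -1 else 1) else 0)"

definition lorentzian_matrix :: "real^4^4 \<Rightarrow> bool" where
  "lorentzian_matrix A \<longleftrightarrow> transpose A = A \<and>
     (\<exists>P::real^4^4. invertible P \<and> transpose P ** A ** P = minkowski)"

definition lorentzian_metric :: "pt set \<Rightarrow> (pt \<Rightarrow> real^4^4) \<Rightarrow> bool" where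
  "lorentzian_metric U G \<longleftrightarrow> open U \<and>
     (\<forall>i j. smooth_on U (\<lambda>x. G x $ i $ j)) \<and> (\<forall>x\<in>U. lorentzian_matrix (G x))"

definition ginv :: "(pt \<Rightarrow> real^4^4) \<Rightarrow> pt \<Rightarrow> 4 \<Rightarrow> 4 \<Rightarrow> real" where
  "ginv G x i j = matrix_inv (G x) $ i $ j"

definition christoffel :: "(pt \<Rightarrow> real^4^4) \<Rightarrow> pt \<Rightarrow> 4 \<Rightarrow> 4 \<Rightarrow> 4 \<Rightarrow> real" where
  "christoffel G x k i j = (1/2) * (\<Sum>l\<in>UNIV. ginv G x k l *
     (partial i (\<lambda>y. G y $ j $ l) x + partial j (\<lambda>y. G y $ i $ l) x
      - partial l (\<lambda>y. G y $ i $ j) x))"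

definition riemann_up :: "(pt \<Rightarrow> real^4^4) \<Rightarrow> pt \<Rightarrow> 4 \<Rightarrow> 4 \<Rightarrow> 4 \<Rightarrow> 4 \<Rightarrow> real" where
  "riemann_up G x a b c d =
     partial c (\<lambda>y. christoffel G y a d b) x - partial d (\<lambda>y. christoffel G y a c b) x
     + (\<Sum>e\<in>UNIV. christoffel G x a c e * christoffel G x e d b
                 - christoffel G x a d e * christoffel G x e c b)"

definition riemann :: "(pt \<Rightarrow> real^4^4) \<Rightarrow> pt \<Rightarrow> 4 \<Rightarrow> 4 \<Rightarrow> 4 \<Rightarrow> 4 \<Rightarrow> real" where
  "riemann G x a b c d = (\<Sum>e\<in>UNIV. G x $ a $ e * riemann_up G x e b c d)"

definition ricci :: "(pt \<Rightarrow> real^4^4) \<Rightarrow> pt \<Rightarrow> 4 \<Rightarrow> 4 \<Rightarrow> real" where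
  "ricci G x b d = (\<Sum>a\<in>UNIV. riemann_up G x a b a d)"

definition scalar_curv :: "(pt \<Rightarrow> real^4^4) \<Rightarrow> pt \<Rightarrow> real" where
  "scalar_curv G x = (\<Sum>b\<in>UNIV. \<Sum>d\<in>UNIV. ginv G x b d * ricci G x b d)"

definition weyl :: "(pt \<Rightarrow> real^4^4) \<Rightarrow> pt \<Rightarrow> 4 \<Rightarrow> 4 \<Rightarrow> 4 \<Rightarrow> 4 \<Rightarrow> real" where
  "weyl G x a b c d =
     riemann G x a b c d
     - (1/2) * (G x $ a $ c * ricci G x b d - G x $ a $ d * ricci G x b c
                + G x $ b $ d * ricci G x a c - G x $ b $ c * ricci G x a d)
     + (scalar_curv G x / 6) * (G x $ a $ c * G x $ b $ d - G x $ a $ d * G x $ b $ c)"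

definition lower :: "(pt \<Rightarrow> real^4^4) \<Rightarrow> (pt \<Rightarrow> real^4) \<Rightarrow> pt \<Rightarrow> 4 \<Rightarrow> real" where
  "lower G u x i = (\<Sum>k\<in>UNIV. G x $ i $ k * u x $ k)"

definition cov_deriv_form :: "(pt \<Rightarrow> real^4^4) \<Rightarrow> (pt \<Rightarrow> real^4) \<Rightarrow> pt \<Rightarrow> 4 \<Rightarrow> 4 \<Rightarrow> real" where
  "cov_deriv_form G u x i j =
     partial i (\<lambda>y. lower G u y j) x - (\<Sum>k\<in>UNIV. christoffel G x k i j * lower G u x k)"

definition electric :: "(pt \<Rightarrow> real^4^4) \<Rightarrow> (pt \<Rightarrow> real^4) \<Rightarrow> pt \<Rightarrow> 4 \<Rightarrow> 4 \<Rightarrow> real" where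
  "electric G u x a d = (\<Sum>b\<in>UNIV. \<Sum>c\<in>UNIV. u x $ b * u x $ c * weyl G x a b c d)"

end

theory Submission
  imports Defs
begin

lemma line_has_derivative:
  fixes f :: "real^4 \<Rightarrow> real"
  assumes "(f has_derivative D) (at (x + c *\<^sub>R v))"
  shows "((\<lambda>t. f (x + t *\<^sub>R v)) has_real_derivative D v) (at c)"
proof -
  have l: "((\<lambda>t. x + t *\<^sub>R v) has_derivative (\<lambda>t. t *\<^sub>R v)) (at c)"
    by (auto intro!: derivative_eq_intros)
  have "((\<lambda>t. f (x + t *\<^sub>R v)) has_derivative (\<lambda>t. D (t *\<^sub>R v))) (at c)"
    using has_derivative_compose[OF l assms] by (simp add: o_def)
  moreover have "(\<lambda>t. D (t *\<^sub>R v)) = (\<lambda>t. D v * t)"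
    using has_derivative_linear[OF assms] by (auto simp: linear_scale)
  ultimately show ?thesis by (simp add: has_field_derivative_def)
qed

lemma partial_eq:
  assumes "(f has_derivative D) (at x)"
  shows "partial k f x = D (axis k 1)"
proof -
  have "((\<lambda>t. f (x + t *\<^sub>R axis k 1)) has_real_derivative D (axis k 1)) (at 0)"
    using line_has_derivative[of f D x 0] assms by simp
  then show ?thesis unfolding partial_def by (rule DERIV_imp_deriv)
qed

lemma partial_fd:
  assumes "f differentiable (at x)"
  shows "partial k f x = frechet_derivative f (at x) (axis k 1)"
  using assms frechet_derivative_works partial_eq by blast

lemma partial_line:
  assumes "f differentiable (at (x + c *\<^sub>R axis k 1))"
  shows "((\<lambda>t. f (x + t *\<^sub>R axis k 1)) has_real_derivative partial k f (x + c *\<^sub>R axis k 1)) (at c)"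
  using assms line_has_derivative partial_fd frechet_derivative_works by metis

lemma partial_local:
  assumes "open U" "x \<in> U" "\<And>y. y \<in> U \<Longrightarrow> f y = g y"
  shows "partial k f x = partial k g x"
  unfolding partial_def
proof (rule deriv_cong_ev[OF _ refl])
  have "open ((\<lambda>t. x + t *\<^sub>R axis k (1::real)) -` U)"
    by (rule open_vimage[OF assms(1)]) (intro continuous_intros)
  moreover have "0 \<in> (\<lambda>t. x + t *\<^sub>R axis k (1::real)) -` U" using assms by simp
  ultimately show "\<forall>\<^sub>F t in nhds 0. f (x + t *\<^sub>R axis k 1) = g (x + t *\<^sub>R axis k 1)"
    using assms(3) by (auto simp: eventually_nhds)
qed

lemma partial_add:
  assumes "f differentiable (at x)" "g differentiable (at x)"
  shows "partial k (\<lambda>y. f y + g y) x = partial k f x + partial k g x"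
  using partial_eq[OF has_derivative_add[OF assms[unfolded frechet_derivative_works]]] partial_fd assms by simp

lemma partial_diff:
  assumes "f differentiable (at x)" "g differentiable (at x)"
  shows "partial k (\<lambda>y. f y - g y) x = partial k f x - partial k g x"
  using partial_eq[OF has_derivative_diff[OF assms[unfolded frechet_derivative_works]]] partial_fd assms by simp

lemma partial_mult:
  assumes "f differentiable (at x)" "g differentiable (at x)"
  shows "partial k (\<lambda>y. f y * g y) x = partial k f x * g x + f x * partial k g x"
  using partial_eq[OF has_derivative_mult[OF assms[unfolded frechet_derivative_works]]] partial_fd assms by simp

lemma partial_cmult:
  assumes "f differentiable (at x)"
  shows "partial k (\<lambda>y. c * f y) x = c * partial k f x"
  using partial_mult[OF differentiable_const assms] partial_eq[OF has_derivative_const] by simp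

lemma partial_const: "partial k (\<lambda>y. c) x = 0"
  using partial_eq[OF has_derivative_const] by simp

lemma partial_sum:
  assumes "finite S" "\<And>i. i \<in> S \<Longrightarrow> f i differentiable (at x)"
  shows "partial k (\<lambda>y. \<Sum>i\<in>S. f i y) x = (\<Sum>i\<in>S. partial k (f i) x)"
proof -
  have "((\<lambda>y. \<Sum>i\<in>S. f i y) has_derivative (\<lambda>h. \<Sum>i\<in>S. frechet_derivative (f i) (at x) h)) (at x)"
    by (rule has_derivative_sum) (use assms frechet_derivative_works in blast)
  from partial_eq[OF this] show ?thesis using assms partial_fd by simp
qed


lemma iter_partial_snoc: "iter_partial (ks @ [k]) f = iter_partial ks (partial k f)"
  by (induction ks) auto

lemma iter_local:
  assumes "open U" "\<And>y. y \<in> U \<Longrightarrow> f y = g y" "y \<in> U"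
  shows "iter_partial ks f y = iter_partial ks g y"
  using assms(3)
proof (induction ks arbitrary: y)
  case Nil then show ?case using assms by simp
next
  case (Cons k ks)
  have "partial k (iter_partial ks f) y = partial k (iter_partial ks g) y"
    by (rule partial_local[OF assms(1) Cons.prems]) (rule Cons.IH)
  then show ?case by simp
qed

lemma diff_local:
  assumes "open U" "\<And>y. y \<in> U \<Longrightarrow> f y = g y" "x \<in> U" "f differentiable (at x)"
  shows "g differentiable (at x)"
proof -
  from assms(4) obtain D where "(f has_derivative D) (at x)" by (auto simp: differentiable_def)
  then have "(g has_derivative D) (at x)" by (rule has_derivative_transform_within_open[OF _ assms(1,3,2)])
  then show ?thesis by (auto simp: differentiable_def)
qed

definition smoothn :: "nat \<Rightarrow> pt set \<Rightarrow> sfield \<Rightarrow> bool" where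
  "smoothn m U f \<longleftrightarrow> (\<forall>ks. length ks \<le> m \<longrightarrow> (\<forall>x\<in>U. iter_partial ks f differentiable (at x)))"

lemma smooth_iff_n: "smooth_on U f \<longleftrightarrow> (\<forall>m. smoothn m U f)"
  unfolding smooth_on_def smoothn_def
proof (intro iffI allI impI)
  fix ks :: "4 list"
  assume "\<forall>m ks. length ks \<le> m \<longrightarrow> (\<forall>x\<in>U. iter_partial ks f differentiable (at x))"
  then show "\<forall>x\<in>U. iter_partial ks f differentiable (at x)" by blast
qed blast

lemma smoothn_partial:
  assumes "smoothn (Suc m) U f" shows "smoothn m U (partial k f)"
  unfolding smoothn_def
proof (intro allI impI ballI)
  fix ks :: "4 list" and x assume "length ks \<le> m" "x \<in> U"
  with assms have "iter_partial (ks @ [k]) f differentiable (at x)" unfolding smoothn_def by simp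
  then show "iter_partial ks (partial k f) differentiable (at x)" by (simp add: iter_partial_snoc)
qed

lemma smoothn_diff0: "smoothn m U f \<Longrightarrow> x \<in> U \<Longrightarrow> f differentiable (at x)"
  unfolding smoothn_def by (erule allE[of _ "[]"]) simp

lemma smoothn_local:
  assumes "open U" "\<And>y. y \<in> U \<Longrightarrow> f y = g y" "smoothn m U f"
  shows "smoothn m U g"
  unfolding smoothn_def
proof (intro allI impI ballI)
  fix ks :: "4 list" and x assume "length ks \<le> m" "x \<in> U"
  then have "iter_partial ks f differentiable (at x)" using assms(3) smoothn_def by blast
  moreover have "\<And>y. y \<in> U \<Longrightarrow> iter_partial ks f y = iter_partial ks g y" by (rule iter_local[OF assms(1,2)])
  ultimately show "iter_partial ks g differentiable (at x)"
    using diff_local[OF assms(1), of "iter_partial ks f" "iter_partial ks g" x] \<open>x\<in>U\<close> by blast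
qed

lemma smoothn_mono: "smoothn m U f \<Longrightarrow> n \<le> m \<Longrightarrow> smoothn n U f"
  unfolding smoothn_def by auto

lemma iter_add:
  assumes "open U" "smoothn m U f" "smoothn m U g" "length ks \<le> m" "y \<in> U"
  shows "iter_partial ks (\<lambda>z. f z + g z) y = iter_partial ks f y + iter_partial ks g y"
  using assms(4,5)
proof (induction ks arbitrary: y)
  case Nil then show ?case by simp
next
  case (Cons k ks)
  have "iter_partial (k # ks) (\<lambda>z. f z + g z) y
      = partial k (\<lambda>z. iter_partial ks f z + iter_partial ks g z) y"
    by (simp, rule partial_local[OF assms(1) Cons.prems(2)]) (use Cons in simp)
  also have "\<dots> = partial k (iter_partial ks f) y + partial k (iter_partial ks g) y"
    by (rule partial_add) (use assms Cons.prems in \<open>auto simp: smoothn_def\<close>)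
  finally show ?case by simp
qed

lemma smoothn_add:
  assumes "open U" "smoothn m U f" "smoothn m U g"
  shows "smoothn m U (\<lambda>z. f z + g z)"
  unfolding smoothn_def
proof (intro allI impI ballI)
  fix ks :: "4 list" and x assume "length ks \<le> m" "x \<in> U"
  have "(\<lambda>z. iter_partial ks f z + iter_partial ks g z) differentiable (at x)"
    using assms(2,3) \<open>length ks \<le> m\<close> \<open>x\<in>U\<close> unfolding smoothn_def by (intro differentiable_add) auto
  then show "iter_partial ks (\<lambda>z. f z + g z) differentiable (at x)"
    using diff_local[OF assms(1), of "\<lambda>z. iter_partial ks f z + iter_partial ks g z" "iter_partial ks (\<lambda>z. f z + g z)" x]
      iter_add[OF assms \<open>length ks \<le> m\<close>] \<open>x\<in>U\<close> by simp
qed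

lemma smoothn_const: "smoothn m U (\<lambda>z. c)"
proof -
  have "iter_partial ks (\<lambda>z. c) = (\<lambda>z. if ks = [] then c else 0)" for ks
  proof (induction ks)
    case (Cons k ks) then show ?case by (simp add: partial_const)
  qed simp
  then show ?thesis unfolding smoothn_def by simp
qed

lemma smoothn_mult:
  assumes "open U" "smoothn m U f" "smoothn m U g"
  shows "smoothn m U (\<lambda>z. f z * g z)"
  using assms(2,3)
proof (induction m arbitrary: f g)
  case 0
  then show ?case unfolding smoothn_def by (auto intro!: differentiable_mult)
next
  case (Suc m)
  show ?case unfolding smoothn_def
  proof (intro allI impI ballI)
    fix ks :: "4 list" and x assume ks: "length ks \<le> Suc m" and x: "x \<in> U"
    show "iter_partial ks (\<lambda>z. f z * g z) differentiable (at x)"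
    proof (cases ks rule: rev_cases)
      case Nil then show ?thesis using Suc.prems x by (auto intro!: differentiable_mult dest: smoothn_diff0)
    next
      case (snoc ks' k)
      have l: "length ks' \<le> m" using ks snoc by simp
      have pe: "partial k (\<lambda>z. f z * g z) y = partial k f y * g y + f y * partial k g y" if "y \<in> U" for y
        using partial_mult Suc.prems smoothn_diff0 that by blast
      have sm: "smoothn m U (\<lambda>y. partial k f y * g y + f y * partial k g y)"
      proof (intro smoothn_add[OF assms(1)] Suc.IH smoothn_partial)
        show "smoothn (Suc m) U f" "smoothn (Suc m) U g" by (fact Suc.prems)+
        show "smoothn m U f" "smoothn m U g" using Suc.prems smoothn_mono le_SucI by blast+
      qed
      have "smoothn m U (partial k (\<lambda>z. f z * g z))"
        by (rule smoothn_local[OF assms(1) _ sm]) (use pe in auto)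
      then show ?thesis using l x snoc by (simp add: iter_partial_snoc smoothn_def)
    qed
  qed
qed

lemma smooth_add: "open U \<Longrightarrow> smooth_on U f \<Longrightarrow> smooth_on U g \<Longrightarrow> smooth_on U (\<lambda>z. f z + g z)"
  by (simp add: smooth_iff_n smoothn_add)
lemma smooth_mult: "open U \<Longrightarrow> smooth_on U f \<Longrightarrow> smooth_on U g \<Longrightarrow> smooth_on U (\<lambda>z. f z * g z)"
  by (simp add: smooth_iff_n smoothn_mult)
lemma smooth_const: "smooth_on U (\<lambda>z. c)"
  by (simp add: smooth_iff_n smoothn_const)
lemma smooth_partial: "smooth_on U f \<Longrightarrow> smooth_on U (partial k f)"
  by (simp add: smooth_iff_n smoothn_partial)
lemma smooth_diff0: "smooth_on U f \<Longrightarrow> x \<in> U \<Longrightarrow> f differentiable (at x)"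
  using smooth_iff_n smoothn_diff0 by blast
lemma smooth_local: "open U \<Longrightarrow> (\<And>y. y \<in> U \<Longrightarrow> f y = g y) \<Longrightarrow> smooth_on U f \<Longrightarrow> smooth_on U g"
  using smoothn_local unfolding smooth_iff_n by blast
lemma smooth_sum:
  assumes "open U" "finite S" "\<And>i. i \<in> S \<Longrightarrow> smooth_on U (f i)"
  shows "smooth_on U (\<lambda>z. \<Sum>i\<in>S. f i z)"
  using assms(2,3)
proof (induction S rule: finite_induct)
  case empty then show ?case by (simp add: smooth_const)
next
  case (insert a S) then show ?case by (simp add: smooth_add[OF assms(1)])
qed
lemma smooth_cmult: "open U \<Longrightarrow> smooth_on U f \<Longrightarrow> smooth_on U (\<lambda>z. c * f z)"
  using smooth_mult[OF _ smooth_const] by blast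
lemma smooth_minus: "open U \<Longrightarrow> smooth_on U f \<Longrightarrow> smooth_on U (\<lambda>z. - f z)"
  using smooth_cmult[of U f "-1"] by simp
lemma smooth_diff: "open U \<Longrightarrow> smooth_on U f \<Longrightarrow> smooth_on U g \<Longrightarrow> smooth_on U (\<lambda>z. f z - g z)"
  using smooth_add[OF _ _ smooth_minus, of U f g] by simp


lemma mixed_mvt:
  fixes f :: sfield
  assumes U: "open U" and sm: "smooth_on U f" and bl: "ball x r \<subseteq> U" and s: "0 < s" "2 * s < r"
  shows "\<exists>\<sigma> \<tau>. \<bar>\<sigma>\<bar> \<le> s \<and> \<bar>\<tau>\<bar> \<le> s \<and>
     f (x + s *\<^sub>R axis i 1 + s *\<^sub>R axis j 1) - f (x + s *\<^sub>R axis i 1) - f (x + s *\<^sub>R axis j 1) + f x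
     = s * s * partial j (partial i f) (x + \<sigma> *\<^sub>R axis i 1 + \<tau> *\<^sub>R axis j 1)"
proof -
  define e :: "real^4" where "e = axis i 1"
  define d :: "real^4" where "d = axis j 1"
  have inU: "x + a *\<^sub>R e + b *\<^sub>R d \<in> U" if "\<bar>a\<bar> \<le> s" "\<bar>b\<bar> \<le> s" for a b
  proof -
    have "norm (a *\<^sub>R e + b *\<^sub>R d) \<le> norm (a *\<^sub>R e) + norm (b *\<^sub>R d)" by (rule norm_triangle_ineq)
    also have "\<dots> = \<bar>a\<bar> + \<bar>b\<bar>" by (simp add: e_def d_def)
    finally have "norm (a *\<^sub>R e + b *\<^sub>R d) < r" using that s by linarith
    moreover have "dist x (x + a *\<^sub>R e + b *\<^sub>R d) = norm (a *\<^sub>R e + b *\<^sub>R d)"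
      unfolding dist_norm by (metis add_diff_cancel_left' norm_minus_commute add.assoc)
    ultimately have "x + a *\<^sub>R e + b *\<^sub>R d \<in> ball x r" by simp
    then show ?thesis using bl by blast
  qed
  let ?F2 = "partial i f"
  have sm2: "smooth_on U ?F2" using sm by (rule smooth_partial)
  define g where "g = (\<lambda>\<sigma>. f ((x + s *\<^sub>R d) + \<sigma> *\<^sub>R e) - f (x + \<sigma> *\<^sub>R e))"
  have der1: "DERIV g \<sigma> :> ?F2 ((x + s *\<^sub>R d) + \<sigma> *\<^sub>R e) - ?F2 (x + \<sigma> *\<^sub>R e)" if "0 \<le> \<sigma>" "\<sigma> \<le> s" for \<sigma>
  proof -
    have p1: "(x + s *\<^sub>R d) + \<sigma> *\<^sub>R e \<in> U" using inU[of \<sigma> s] that s by (simp add: add_ac)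
    have p2: "x + \<sigma> *\<^sub>R e \<in> U" using inU[of \<sigma> 0] that s by simp
    show ?thesis unfolding g_def e_def
      by (intro DERIV_diff partial_line smooth_diff0[OF sm]) (use p1 p2 e_def in auto)
  qed
  then obtain z where z: "0 < z" "z < s" "g s - g 0 = (s - 0) * (?F2 ((x + s *\<^sub>R d) + z *\<^sub>R e) - ?F2 (x + z *\<^sub>R e))"
    using MVT2[OF s(1), of g "\<lambda>\<sigma>. ?F2 ((x + s *\<^sub>R d) + \<sigma> *\<^sub>R e) - ?F2 (x + \<sigma> *\<^sub>R e)"] der1 by auto
  define h where "h = (\<lambda>\<tau>. ?F2 ((x + z *\<^sub>R e) + \<tau> *\<^sub>R d))"
  have der2: "DERIV h \<tau> :> partial j ?F2 ((x + z *\<^sub>R e) + \<tau> *\<^sub>R d)" if "0 \<le> \<tau>" "\<tau> \<le> s" for \<tau>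
  proof -
    have p1: "(x + z *\<^sub>R e) + \<tau> *\<^sub>R d \<in> U" using inU[of z \<tau>] that z by simp
    show ?thesis unfolding h_def d_def
      by (intro partial_line smooth_diff0[OF sm2]) (use p1 d_def in auto)
  qed
  then obtain w where w: "0 < w" "w < s" "h s - h 0 = (s - 0) * partial j ?F2 ((x + z *\<^sub>R e) + w *\<^sub>R d)"
    using MVT2[OF s(1), of h "\<lambda>\<tau>. partial j ?F2 ((x + z *\<^sub>R e) + \<tau> *\<^sub>R d)"] der2 by auto
  have "f (x + s *\<^sub>R e + s *\<^sub>R d) - f (x + s *\<^sub>R e) - f (x + s *\<^sub>R d) + f x = g s - g 0"
    by (simp add: g_def add_ac)
  also have "\<dots> = s * (h s - h 0)" using z(3) by (simp add: h_def add_ac)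
  also have "\<dots> = s * s * partial j ?F2 (x + z *\<^sub>R e + w *\<^sub>R d)" using w(3) by simp
  finally show ?thesis unfolding e_def d_def using z w
    by (intro exI[of _ z] exI[of _ w]) auto
qed

lemma abs_contra:
  fixes p q a b :: real
  assumes "\<bar>p - a\<bar> < \<bar>a - b\<bar> / 2" "\<bar>q - b\<bar> < \<bar>a - b\<bar> / 2" "p = q"
  shows False
  using assms by (cases "a \<le> b") (auto simp: abs_if split: if_split_asm)

lemma clairaut:
  fixes f :: sfield
  assumes U: "open U" and x: "x \<in> U" and sm: "smooth_on U f"
  shows "partial i (partial j f) x = partial j (partial i f) x"
proof (rule ccontr)
  let ?A = "partial j (partial i f)" and ?B = "partial i (partial j f)"
  assume ne: "?B x \<noteq> ?A x"
  define \<epsilon> where "\<epsilon> = \<bar>?A x - ?B x\<bar> / 2"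
  have ep: "\<epsilon> > 0" using ne by (simp add: \<epsilon>_def)
  have cA: "continuous (at x) ?A"
    by (rule differentiable_imp_continuous_within, rule smooth_diff0[OF _ x])
       (intro smooth_partial sm)
  have cB: "continuous (at x) ?B"
    by (rule differentiable_imp_continuous_within, rule smooth_diff0[OF _ x])
       (intro smooth_partial sm)
  obtain d1 where d1: "d1 > 0" "\<And>y. dist y x < d1 \<Longrightarrow> dist (?A y) (?A x) < \<epsilon>"
    using cA ep unfolding continuous_at_eps_delta by blast
  obtain d2 where d2: "d2 > 0" "\<And>y. dist y x < d2 \<Longrightarrow> dist (?B y) (?B x) < \<epsilon>"
    using cB ep unfolding continuous_at_eps_delta by blast
  obtain r where r: "r > 0" "ball x r \<subseteq> U" using U x openE by blast
  define s where "s = min r (min d1 d2) / 3"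
  have s: "0 < s" "2 * s < r" "2 * s < d1" "2 * s < d2" using r d1 d2 by (auto simp: s_def)
  have nb: "dist (x + a *\<^sub>R axis i 1 + b *\<^sub>R axis j 1) x \<le> 2 * s" if "\<bar>a\<bar> \<le> s" "\<bar>b\<bar> \<le> s" for a b i j
  proof -
    have "norm (a *\<^sub>R axis i (1::real) + b *\<^sub>R axis j 1) \<le> norm (a *\<^sub>R axis i (1::real)) + norm (b *\<^sub>R axis j (1::real))"
      by (rule norm_triangle_ineq)
    also have "\<dots> = \<bar>a\<bar> + \<bar>b\<bar>" by simp
    finally show ?thesis using that by (simp add: dist_norm)
  qed
  obtain \<sigma>1 \<tau>1 where 1: "\<bar>\<sigma>1\<bar> \<le> s" "\<bar>\<tau>1\<bar> \<le> s"
    "f (x + s *\<^sub>R axis i 1 + s *\<^sub>R axis j 1) - f (x + s *\<^sub>R axis i 1) - f (x + s *\<^sub>R axis j 1) + f x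
     = s * s * ?A (x + \<sigma>1 *\<^sub>R axis i 1 + \<tau>1 *\<^sub>R axis j 1)"
    using mixed_mvt[OF U sm r(2) s(1,2), of i j] by blast
  obtain \<sigma>2 \<tau>2 where 2: "\<bar>\<sigma>2\<bar> \<le> s" "\<bar>\<tau>2\<bar> \<le> s"
    "f (x + s *\<^sub>R axis j 1 + s *\<^sub>R axis i 1) - f (x + s *\<^sub>R axis j 1) - f (x + s *\<^sub>R axis i 1) + f x
     = s * s * ?B (x + \<sigma>2 *\<^sub>R axis j 1 + \<tau>2 *\<^sub>R axis i 1)"
    using mixed_mvt[OF U sm r(2) s(1,2), of j i] by blast
  have "s * s * ?A (x + \<sigma>1 *\<^sub>R axis i 1 + \<tau>1 *\<^sub>R axis j 1) = s * s * ?B (x + \<sigma>2 *\<^sub>R axis j 1 + \<tau>2 *\<^sub>R axis i 1)"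
  proof -
    have ee: "x + s *\<^sub>R axis j 1 + s *\<^sub>R axis i 1 = x + s *\<^sub>R axis i 1 + s *\<^sub>R axis j (1::real)" by (simp add: add_ac)
    show ?thesis using 1(3) 2(3)[unfolded ee] by linarith
  qed
  then have eq: "?A (x + \<sigma>1 *\<^sub>R axis i 1 + \<tau>1 *\<^sub>R axis j 1) = ?B (x + \<sigma>2 *\<^sub>R axis j 1 + \<tau>2 *\<^sub>R axis i 1)"
    using s(1) by simp
  have "dist (?A (x + \<sigma>1 *\<^sub>R axis i 1 + \<tau>1 *\<^sub>R axis j 1)) (?A x) < \<epsilon>"
    by (rule d1(2)) (use nb[OF 1(1,2), of i j] s in linarith)
  moreover have "dist (?B (x + \<sigma>2 *\<^sub>R axis j 1 + \<tau>2 *\<^sub>R axis i 1)) (?B x) < \<epsilon>"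
    by (rule d2(2)) (use nb[OF 2(1,2), of j i] s in linarith)
  ultimately show False using eq unfolding dist_real_def \<epsilon>_def by (intro abs_contra)
qed


lemma four_facts: "(1::4) \<noteq> 0" "(2::4) \<noteq> 0" "(3::4) \<noteq> 0" "(4::4) = 0" "(1::4) \<noteq> 2" "(1::4) \<noteq> 3" "(2::4) \<noteq> 3"
  by simp_all

lemma UNIV4: "(UNIV::4 set) = {0,1,2,3}"
  unfolding UNIV_4 by auto

lemma sum4: "(\<Sum>i\<in>(UNIV::4 set). f i) = f 0 + f 1 + f 2 + f 3"
  unfolding UNIV4 by (simp add: ac_simps)

lemma prod4: "(\<Prod>i\<in>(UNIV::4 set). f i) = f 0 * f 1 * f 2 * f 3"
  unfolding UNIV4 by (simp add: ac_simps)

lemma minkowski_det: "det minkowski = -1"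
  by (subst det_diagonal) (auto simp: minkowski_def prod4)

lemma lor_det: assumes "lorentzian_matrix A" shows "det A \<noteq> 0"
proof -
  obtain P where P: "invertible P" "transpose P ** A ** P = minkowski"
    using assms unfolding lorentzian_matrix_def by blast
  have "det (transpose P ** A ** P) = det P * det A * det P" by (simp add: det_mul)
  then show ?thesis using P minkowski_det by auto
qed

lemma lor_sym: assumes "lorentzian_matrix A" shows "A$i$j = A$j$i"
proof -
  have "transpose A = A" using assms unfolding lorentzian_matrix_def by blast
  have "A$i$j = transpose A $ j $ i" by (simp add: transpose_def)
  then show ?thesis using \<open>transpose A = A\<close> by simp
qed

lemma inv_props:
  fixes A :: "real^'n^'n"
  assumes "det A \<noteq> 0"
  shows "A ** matrix_inv A = mat 1" "matrix_inv A ** A = mat 1"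
proof -
  have "invertible A" using assms invertible_det_nz by blast
  then have "\<exists>A'. A ** A' = mat 1 \<and> A' ** A = mat 1" unfolding invertible_def by blast
  then have "A ** matrix_inv A = mat 1 \<and> matrix_inv A ** A = mat 1"
    unfolding matrix_inv_def by (rule someI_ex)
  then show "A ** matrix_inv A = mat 1" "matrix_inv A ** A = mat 1" by auto
qed

lemma inv_sym:
  fixes A :: "real^'n^'n"
  assumes "det A \<noteq> 0" "transpose A = A"
  shows "matrix_inv A $ i $ j = matrix_inv A $ j $ i"
proof -
  let ?B = "matrix_inv A"
  have "transpose ?B ** A = mat 1"
  proof -
    have "transpose ?B ** A = transpose ?B ** transpose A" using assms(2) by simp
    also have "\<dots> = transpose (A ** ?B)" by (simp add: matrix_transpose_mul)
    finally show ?thesis using inv_props(1)[OF assms(1)] by simp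
  qed
  then have "transpose ?B = transpose ?B ** (A ** ?B)" using inv_props(1)[OF assms(1)] by simp
  also have "\<dots> = ?B" by (simp add: matrix_mul_assoc \<open>transpose ?B ** A = mat 1\<close>)
  finally have tb: "transpose ?B = ?B" .
  have "?B $ i $ j = transpose ?B $ j $ i" by (simp add: transpose_def)
  then show ?thesis using tb by simp
qed

lemma cramer_inv:
  fixes A :: "real^'n^'n"
  assumes "det A \<noteq> 0"
  shows "matrix_inv A $ k $ l = det (\<chi> i j. if j = k then axis l 1 $ i else A$i$j) / det A"
proof -
  let ?x = "matrix_inv A *v axis l 1"
  have "A *v ?x = axis l 1" using inv_props(1)[OF assms] by (simp add: matrix_vector_mul_assoc)
  then have "?x = (\<chi> k. det(\<chi> i j. if j=k then axis l 1 $ i else A$i$j) / det A)"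
    using cramer[OF assms] by blast
  then have "?x $ k = det(\<chi> i j. if j=k then axis l 1 $ i else A$i$j) / det A" by simp
  moreover have "?x $ k = matrix_inv A $ k $ l"
    by (simp add: matrix_vector_mult_def axis_def if_distrib cong: if_cong)
  ultimately show ?thesis by simp
qed

lemma differentiable_prod':
  fixes f :: "'i \<Rightarrow> 'a::real_normed_vector \<Rightarrow> real"
  assumes "\<And>i. i \<in> I \<Longrightarrow> f i differentiable (at x)"
  shows "(\<lambda>y. \<Prod>i\<in>I. f i y) differentiable (at x)"
proof -
  from assms have "\<forall>i\<in>I. \<exists>D. (f i has_derivative D) (at x)" unfolding differentiable_def by blast
  then obtain D where "\<forall>i\<in>I. (f i has_derivative D i) (at x)" by metis
  then show ?thesis unfolding differentiable_def by (blast intro: has_derivative_prod)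
qed

lemma differentiable_det:
  fixes M :: "'a::real_normed_vector \<Rightarrow> real^'n^'n"
  assumes "\<And>i j. (\<lambda>y. M y $ i $ j) differentiable (at x)"
  shows "(\<lambda>y. det (M y)) differentiable (at x)"
  unfolding det_def
  by (intro differentiable_sum differentiable_mult differentiable_const differentiable_prod' ballI finite_permutations) 
     (use assms in auto)


definition gam :: "(pt \<Rightarrow> real^4^4) \<Rightarrow> pt \<Rightarrow> 4 \<Rightarrow> 4 \<Rightarrow> 4 \<Rightarrow> real" where
  "gam G y l i j = (1/2) * (partial i (\<lambda>y. G y $ j $ l) y + partial j (\<lambda>y. G y $ i $ l) y
      - partial l (\<lambda>y. G y $ i $ j) y)"

lemma chr_gam: "christoffel G y k i j = (\<Sum>l\<in>UNIV. ginv G y k l * gam G y l i j)"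
  unfolding christoffel_def gam_def by (simp add: sum_distrib_left algebra_simps)

locale lor =
  fixes U :: "pt set" and G :: "pt \<Rightarrow> real^4^4"
  assumes metric: "lorentzian_metric U G"
begin

lemma openU: "open U" using metric lorentzian_metric_def by blast

lemma Gsmooth: "smooth_on U (\<lambda>y. G y $ i $ j)" using metric lorentzian_metric_def by blast

lemma Glor: "x \<in> U \<Longrightarrow> lorentzian_matrix (G x)" using metric lorentzian_metric_def by blast

lemma Gsym: "x \<in> U \<Longrightarrow> G x $ i $ j = G x $ j $ i" using Glor lor_sym by blast

lemma Gtr: "x \<in> U \<Longrightarrow> transpose (G x) = G x" using Glor lorentzian_matrix_def by blast

lemma detG: "x \<in> U \<Longrightarrow> det (G x) \<noteq> 0" using Glor lor_det by blast

lemma G_ginv: "x \<in> U \<Longrightarrow> (\<Sum>k\<in>UNIV. G x $ i $ k * ginv G x k j) = (if i = j then 1 else 0)"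
proof -
  assume x: "x \<in> U"
  have "(G x ** matrix_inv (G x)) $ i $ j = (if i = j then 1 else 0)"
    using inv_props(1)[OF detG[OF x]] by (simp add: mat_def)
  then show ?thesis by (simp add: matrix_matrix_mult_def ginv_def)
qed

lemma ginv_G: "x \<in> U \<Longrightarrow> (\<Sum>k\<in>UNIV. ginv G x i k * G x $ k $ j) = (if i = j then 1 else 0)"
proof -
  assume x: "x \<in> U"
  have "(matrix_inv (G x) ** G x) $ i $ j = (if i = j then 1 else 0)"
    using inv_props(2)[OF detG[OF x]] by (simp add: mat_def)
  then show ?thesis by (simp add: matrix_matrix_mult_def ginv_def)
qed

lemma ginv_sym: "x \<in> U \<Longrightarrow> ginv G x i j = ginv G x j i"
  unfolding ginv_def using inv_sym detG Gtr by blast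

lemma G_diff: "x \<in> U \<Longrightarrow> (\<lambda>y. G y $ i $ j) differentiable (at x)"
  using Gsmooth smooth_diff0 by blast

lemma dG_smooth: "smooth_on U (partial k (\<lambda>y. G y $ i $ j))"
  using Gsmooth smooth_partial by blast

lemma dG_diff: "x \<in> U \<Longrightarrow> partial k (\<lambda>y. G y $ i $ j) differentiable (at x)"
  using dG_smooth smooth_diff0 by blast

lemma ginv_diff: "x \<in> U \<Longrightarrow> (\<lambda>y. ginv G y k l) differentiable (at x)"
proof -
  assume x: "x \<in> U"
  let ?M = "\<lambda>y. (\<chi> i j. if j = k then axis l 1 $ i else G y $ i $ j) :: real^4^4"
  have eq: "\<And>y. y \<in> U \<Longrightarrow> det (?M y) / det (G y) = ginv G y k l"
    unfolding ginv_def by (rule cramer_inv[symmetric], rule detG)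
  have "(\<lambda>y. det (?M y) / det (G y)) differentiable (at x)"
  proof (intro differentiable_divide differentiable_det)
    show "(\<lambda>y. ?M y $ i $ j) differentiable (at x)" for i j
      by (cases "j = k") (auto intro: G_diff[OF x])
    show "(\<lambda>y. G y $ i $ j) differentiable (at x)" for i j by (rule G_diff[OF x])
    show "det (G x) \<noteq> 0" by (rule detG[OF x])
  qed
  then obtain D where "((\<lambda>y. det (?M y) / det (G y)) has_derivative D) (at x)"
    unfolding differentiable_def by blast
  then have "((\<lambda>y. ginv G y k l) has_derivative D) (at x)"
    by (rule has_derivative_transform_within_open[OF _ openU x eq])
  then show ?thesis unfolding differentiable_def by blast
qed

lemma gam_diff: "x \<in> U \<Longrightarrow> (\<lambda>y. gam G y l i j) differentiable (at x)"
  unfolding gam_def by (intro derivative_intros dG_diff)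

lemma chr_diff: "x \<in> U \<Longrightarrow> (\<lambda>y. christoffel G y k i j) differentiable (at x)"
  unfolding chr_gam by (intro differentiable_sum ballI differentiable_mult ginv_diff gam_diff) auto

lemma dG_sym: "x \<in> U \<Longrightarrow> partial a (\<lambda>y. G y $ i $ j) x = partial a (\<lambda>y. G y $ j $ i) x"
  by (rule partial_local[OF openU], assumption, rule Gsym)

lemma ddG_sym: "x \<in> U \<Longrightarrow> partial c (partial a (\<lambda>y. G y $ i $ j)) x = partial c (partial a (\<lambda>y. G y $ j $ i)) x"
  by (rule partial_local[OF openU], assumption, rule dG_sym)

lemma ddG_comm: "x \<in> U \<Longrightarrow> partial c (partial a (\<lambda>y. G y $ i $ j)) x = partial a (partial c (\<lambda>y. G y $ i $ j)) x"
  by (rule clairaut[OF openU _ Gsmooth])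

lemma gam_sym: "x \<in> U \<Longrightarrow> gam G x l i j = gam G x l j i"
  unfolding gam_def using dG_sym[of x l i j] by simp

lemma dG_gam: assumes x: "x \<in> U" shows "partial a (\<lambda>y. G y $ i $ j) x = gam G x i a j + gam G x j a i"
  unfolding gam_def using dG_sym[OF x, of a i j] by (simp add: field_simps)

lemma G_chr: "x \<in> U \<Longrightarrow> (\<Sum>k\<in>UNIV. G x $ l $ k * christoffel G x k i j) = gam G x l i j"
proof -
  assume x: "x \<in> U"
  have "(\<Sum>k\<in>UNIV. G x $ l $ k * christoffel G x k i j)
      = (\<Sum>k\<in>UNIV. \<Sum>m\<in>UNIV. G x $ l $ k * ginv G x k m * gam G x m i j)"
    unfolding chr_gam by (simp add: sum_distrib_left mult.assoc)
  also have "\<dots> = (\<Sum>m\<in>UNIV. (\<Sum>k\<in>UNIV. G x $ l $ k * ginv G x k m) * gam G x m i j)"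
    by (subst sum.swap) (simp add: sum_distrib_right)
  also have "\<dots> = (\<Sum>m\<in>UNIV. (if l = m then gam G x m i j else 0))"
  proof -
    have "\<And>m. (\<Sum>k\<in>UNIV. G x $ l $ k * ginv G x k m) * gam G x m i j = (if l = m then gam G x m i j else 0)"
      by (simp add: G_ginv[OF x])
    then show ?thesis by simp
  qed
  also have "\<dots> = gam G x l i j" by simp
  finally show ?thesis .
qed

lemma dgam: "x \<in> U \<Longrightarrow> partial c (\<lambda>y. gam G y l i j) x =
   (1/2) * (partial c (partial i (\<lambda>y. G y $ j $ l)) x + partial c (partial j (\<lambda>y. G y $ i $ l)) x
      - partial c (partial l (\<lambda>y. G y $ i $ j)) x)"
proof -
  assume x: "x \<in> U"
  let ?P1 = "partial i (\<lambda>y. G y $ j $ l)" and ?P2 = "partial j (\<lambda>y. G y $ i $ l)"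
    and ?P3 = "partial l (\<lambda>y. G y $ i $ j)"
  have "partial c (\<lambda>y. (1/2) * (?P1 y + ?P2 y - ?P3 y)) x = (1/2) * partial c (\<lambda>y. ?P1 y + ?P2 y - ?P3 y) x"
    by (rule partial_cmult) (intro differentiable_diff differentiable_add dG_diff x)
  also have "partial c (\<lambda>y. ?P1 y + ?P2 y - ?P3 y) x = partial c (\<lambda>y. ?P1 y + ?P2 y) x - partial c ?P3 x"
    by (rule partial_diff) (intro differentiable_diff differentiable_add dG_diff x)+
  also have "partial c (\<lambda>y. ?P1 y + ?P2 y) x = partial c ?P1 x + partial c ?P2 x"
    by (rule partial_add) (intro dG_diff x)+
  finally show ?thesis unfolding gam_def .
qed

end

context lor begin

lemma low_dchr:
  assumes x: "x \<in> U"
  shows "(\<Sum>e\<in>UNIV. G x $ a $ e * partial c (\<lambda>y. christoffel G y e d b) x)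
       = partial c (\<lambda>y. gam G y a d b) x - (\<Sum>e\<in>UNIV. partial c (\<lambda>y. G y $ a $ e) x * christoffel G x e d b)"
proof -
  have "partial c (\<lambda>y. \<Sum>e\<in>UNIV. G y $ a $ e * christoffel G y e d b) x = partial c (\<lambda>y. gam G y a d b) x"
    by (rule partial_local[OF openU x]) (rule G_chr)
  moreover have "partial c (\<lambda>y. \<Sum>e\<in>UNIV. G y $ a $ e * christoffel G y e d b) x
      = (\<Sum>e\<in>UNIV. partial c (\<lambda>y. G y $ a $ e * christoffel G y e d b) x)"
    by (rule partial_sum) (auto intro!: differentiable_mult G_diff chr_diff x)
  moreover have "\<And>e. partial c (\<lambda>y. G y $ a $ e * christoffel G y e d b) x
      = partial c (\<lambda>y. G y $ a $ e) x * christoffel G x e d b + G x $ a $ e * partial c (\<lambda>y. christoffel G y e d b) x"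
    by (rule partial_mult) (auto intro!: G_diff chr_diff x)
  ultimately show ?thesis by (simp add: sum.distrib)
qed

lemma quad_low:
  assumes x: "x \<in> U"
  shows "(\<Sum>e\<in>UNIV. G x $ a $ e * (\<Sum>f\<in>UNIV. christoffel G x e c f * christoffel G x f d b))
       = (\<Sum>f\<in>UNIV. gam G x a c f * christoffel G x f d b)"
proof -
  have "(\<Sum>e\<in>UNIV. G x $ a $ e * (\<Sum>f\<in>UNIV. christoffel G x e c f * christoffel G x f d b))
      = (\<Sum>e\<in>UNIV. \<Sum>f\<in>UNIV. G x $ a $ e * christoffel G x e c f * christoffel G x f d b)"
    by (simp add: sum_distrib_left mult.assoc)
  also have "\<dots> = (\<Sum>f\<in>UNIV. (\<Sum>e\<in>UNIV. G x $ a $ e * christoffel G x e c f) * christoffel G x f d b)"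
    by (subst sum.swap) (simp add: sum_distrib_right)
  also have "\<dots> = (\<Sum>f\<in>UNIV. gam G x a c f * christoffel G x f d b)"
    by (simp add: G_chr[OF x])
  finally show ?thesis .
qed

definition Qt :: "pt \<Rightarrow> 4 \<Rightarrow> 4 \<Rightarrow> 4 \<Rightarrow> 4 \<Rightarrow> real" where
  "Qt x a b c d = (\<Sum>e\<in>UNIV. \<Sum>f\<in>UNIV. ginv G x e f * gam G x e c a * gam G x f d b)"

lemma gam_chr: "(\<Sum>e\<in>UNIV. gam G x e c a * christoffel G x e d b) = Qt x a b c d"
  unfolding Qt_def chr_gam by (simp add: sum_distrib_left mult_ac)

lemma riem_formula:
  assumes x: "x \<in> U"
  shows "riemann G x a b c d = partial c (\<lambda>y. gam G y a d b) x - partial d (\<lambda>y. gam G y a c b) x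
     - Qt x a b c d + Qt x a b d c"
proof -
  let ?C = "christoffel G x"
  have "riemann G x a b c d =
      (\<Sum>e\<in>UNIV. G x $ a $ e * partial c (\<lambda>y. christoffel G y e d b) x)
    - (\<Sum>e\<in>UNIV. G x $ a $ e * partial d (\<lambda>y. christoffel G y e c b) x)
    + (\<Sum>e\<in>UNIV. G x $ a $ e * (\<Sum>f\<in>UNIV. ?C e c f * ?C f d b))
    - (\<Sum>e\<in>UNIV. G x $ a $ e * (\<Sum>f\<in>UNIV. ?C e d f * ?C f c b))"
    unfolding riemann_def riemann_up_def
    by (simp add: algebra_simps sum.distrib sum_subtractf sum_distrib_left)
  also have "\<dots> = partial c (\<lambda>y. gam G y a d b) x - (\<Sum>e\<in>UNIV. (gam G x a c e + gam G x e c a) * ?C e d b)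
     - (partial d (\<lambda>y. gam G y a c b) x - (\<Sum>e\<in>UNIV. (gam G x a d e + gam G x e d a) * ?C e c b))
     + (\<Sum>f\<in>UNIV. gam G x a c f * ?C f d b) - (\<Sum>f\<in>UNIV. gam G x a d f * ?C f c b)"
    by (simp add: low_dchr[OF x] quad_low[OF x] dG_gam[OF x])
  also have "\<dots> = partial c (\<lambda>y. gam G y a d b) x - partial d (\<lambda>y. gam G y a c b) x
     - (\<Sum>e\<in>UNIV. gam G x e c a * ?C e d b) + (\<Sum>e\<in>UNIV. gam G x e d a * ?C e c b)"
    by (simp add: algebra_simps sum.distrib)
  finally show ?thesis by (simp add: gam_chr)
qed

lemma Qt_swap: assumes x: "x \<in> U" shows "Qt x a b c d = Qt x b a d c"
proof -
  have "Qt x a b c d = (\<Sum>f\<in>UNIV. \<Sum>e\<in>UNIV. ginv G x e f * gam G x e c a * gam G x f d b)"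
    unfolding Qt_def by (rule sum.swap)
  also have "\<dots> = Qt x b a d c"
    unfolding Qt_def using ginv_sym[OF x] by (simp add: mult_ac)
  finally show ?thesis .
qed

lemma riem_antisym1:
  assumes x: "x \<in> U"
  shows "riemann G x a b c d = - riemann G x b a c d"
proof -
  have e1: "partial c (\<lambda>y. gam G y a d b) x + partial c (\<lambda>y. gam G y b d a) x
        = partial c (partial d (\<lambda>y. G y $ a $ b)) x"
    unfolding dgam[OF x] using ddG_sym[OF x, of c d a b] by (simp add: field_simps)
  have e2: "partial d (\<lambda>y. gam G y a c b) x + partial d (\<lambda>y. gam G y b c a) x
        = partial d (partial c (\<lambda>y. G y $ a $ b)) x"
    unfolding dgam[OF x] using ddG_sym[OF x, of d c a b] by (simp add: field_simps)
  have e3: "partial c (partial d (\<lambda>y. G y $ a $ b)) x = partial d (partial c (\<lambda>y. G y $ a $ b)) x"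
    by (rule ddG_comm[OF x])
  show ?thesis
    unfolding riem_formula[OF x] using e1 e2 e3 Qt_swap[OF x, of a b c d] Qt_swap[OF x, of a b d c]
    by linarith
qed

end

locale tor = lor +
  fixes u :: "pt \<Rightarrow> real^4" and \<phi> :: "pt \<Rightarrow> real"
  assumes u_smooth: "\<forall>k. smooth_on U (\<lambda>x. u x $ k)"
    and phi_smooth: "smooth_on U \<phi>"
    and torse: "\<forall>x\<in>U. \<forall>i j. cov_deriv_form G u x i j
                    = \<phi> x * (G x $ i $ j + lower G u x i * lower G u x j)"
begin

lemma w_smooth: "smooth_on U (\<lambda>y. lower G u y j)"
  unfolding lower_def
  by (intro smooth_sum openU finite_UNIV smooth_mult Gsmooth) (use u_smooth in auto)

lemma w_diff: "x \<in> U \<Longrightarrow> (\<lambda>y. lower G u y j) differentiable (at x)"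
  using w_smooth smooth_diff0 by blast

lemma dw_diff: "x \<in> U \<Longrightarrow> partial i (\<lambda>y. lower G u y j) differentiable (at x)"
  using w_smooth smooth_partial smooth_diff0 by blast

lemma phi_diff: "x \<in> U \<Longrightarrow> \<phi> differentiable (at x)"
  using phi_smooth smooth_diff0 by blast

lemma chr_sym: "x \<in> U \<Longrightarrow> christoffel G x k i j = christoffel G x k j i"
  unfolding chr_gam using gam_sym by simp

lemma T0: "x \<in> U \<Longrightarrow> partial i (\<lambda>y. lower G u y j) x
    = \<phi> x * (G x $ i $ j + lower G u x i * lower G u x j) + (\<Sum>k\<in>UNIV. christoffel G x k i j * lower G u x k)"
proof -
  assume x: "x \<in> U"
  have "cov_deriv_form G u x i j = \<phi> x * (G x $ i $ j + lower G u x i * lower G u x j)"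
    using torse x by blast
  then show ?thesis unfolding cov_deriv_form_def by linarith
qed

lemma T1:
  assumes x: "x \<in> U"
  shows "partial a (partial i (\<lambda>y. lower G u y j)) x
     - (\<Sum>k\<in>UNIV. partial a (\<lambda>y. christoffel G y k i j) x * lower G u x k
          + christoffel G x k i j * partial a (\<lambda>y. lower G u y k) x)
   = partial a \<phi> x * (G x $ i $ j + lower G u x i * lower G u x j)
     + \<phi> x * (partial a (\<lambda>y. G y $ i $ j) x + partial a (\<lambda>y. lower G u y i) x * lower G u x j
              + lower G u x i * partial a (\<lambda>y. lower G u y j) x)"
proof -
  have "partial a (\<lambda>y. cov_deriv_form G u y i j) x
      = partial a (\<lambda>y. \<phi> y * (G y $ i $ j + lower G u y i * lower G u y j)) x"
    by (rule partial_local[OF openU x]) (use torse in auto)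
  moreover have "partial a (\<lambda>y. cov_deriv_form G u y i j) x
      = partial a (partial i (\<lambda>y. lower G u y j)) x
        - (\<Sum>k\<in>UNIV. partial a (\<lambda>y. christoffel G y k i j) x * lower G u x k
          + christoffel G x k i j * partial a (\<lambda>y. lower G u y k) x)"
  proof -
    have "partial a (\<lambda>y. cov_deriv_form G u y i j) x
       = partial a (partial i (\<lambda>y. lower G u y j)) x
         - partial a (\<lambda>y. \<Sum>k\<in>UNIV. christoffel G y k i j * lower G u y k) x"
      unfolding cov_deriv_form_def
      by (rule partial_diff) (auto intro!: dw_diff differentiable_sum differentiable_mult chr_diff w_diff x)
    also have "partial a (\<lambda>y. \<Sum>k\<in>UNIV. christoffel G y k i j * lower G u y k) x
       = (\<Sum>k\<in>UNIV. partial a (\<lambda>y. christoffel G y k i j * lower G u y k) x)"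
      by (rule partial_sum) (auto intro!: differentiable_mult chr_diff w_diff x)
    also have "\<dots> = (\<Sum>k\<in>UNIV. partial a (\<lambda>y. christoffel G y k i j) x * lower G u x k
          + christoffel G x k i j * partial a (\<lambda>y. lower G u y k) x)"
      by (rule sum.cong[OF refl], rule partial_mult) (auto intro!: chr_diff w_diff x)
    finally show ?thesis .
  qed
  moreover have "partial a (\<lambda>y. \<phi> y * (G y $ i $ j + lower G u y i * lower G u y j)) x
      = partial a \<phi> x * (G x $ i $ j + lower G u x i * lower G u x j)
        + \<phi> x * partial a (\<lambda>y. G y $ i $ j + lower G u y i * lower G u y j) x"
    by (rule partial_mult) (auto intro!: phi_diff G_diff w_diff differentiable_mult differentiable_add x)
  moreover have "partial a (\<lambda>y. G y $ i $ j + lower G u y i * lower G u y j) x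
      = partial a (\<lambda>y. G y $ i $ j) x + partial a (\<lambda>y. lower G u y i * lower G u y j) x"
    by (rule partial_add) (auto intro!: G_diff w_diff differentiable_mult x)
  moreover have "partial a (\<lambda>y. lower G u y i * lower G u y j) x
      = partial a (\<lambda>y. lower G u y i) x * lower G u x j + lower G u x i * partial a (\<lambda>y. lower G u y j) x"
    by (rule partial_mult) (auto intro!: w_diff x)
  ultimately show ?thesis by simp
qed

lemma ddw_comm: "x \<in> U \<Longrightarrow> partial a (partial i (\<lambda>y. lower G u y j)) x = partial i (partial a (\<lambda>y. lower G u y j)) x"
  by (rule clairaut[OF openU _ w_smooth])

end

context tor begin

lemma Xrel_up:
  assumes x: "x \<in> U"
  shows "(\<Sum>e\<in>UNIV. lower G u x e * riemann_up G x e j a i)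
    = - (partial a \<phi> x - (\<phi> x)\<^sup>2 * lower G u x a) * (G x $ i $ j + lower G u x i * lower G u x j)
      + (partial i \<phi> x - (\<phi> x)\<^sup>2 * lower G u x i) * (G x $ a $ j + lower G u x a * lower G u x j)"
proof -
  define w where "w = (\<lambda>k. lower G u x k)"
  define dw where "dw = (\<lambda>a k. partial a (\<lambda>y. lower G u y k) x)"
  define ddw where "ddw = (\<lambda>a i j. partial a (partial i (\<lambda>y. lower G u y j)) x)"
  define C where "C = (\<lambda>k i j. christoffel G x k i j)"
  define dC where "dC = (\<lambda>a k i j. partial a (\<lambda>y. christoffel G y k i j) x)"
  define g where "g = (\<lambda>i j. G x $ i $ j)"
  define dg where "dg = (\<lambda>a i j. partial a (\<lambda>y. G y $ i $ j) x)"
  define h where "h = (\<lambda>i j. g i j + w i * w j)"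
  define ph where "ph = \<phi> x"
  define dph where "dph = (\<lambda>a. partial a \<phi> x)"
  define gm where "gm = (\<lambda>l i j. gam G x l i j)"
  define RHS where "RHS = (\<lambda>a i j. dph a * h i j + ph * (dg a i j + dw a i * w j + w i * dw a j))"
  have T0': "\<And>i j. dw i j = ph * h i j + (\<Sum>k\<in>UNIV. C k i j * w k)"
    unfolding dw_def ph_def h_def g_def w_def C_def using T0[OF x] by simp
  have T1': "\<And>a i j. ddw a i j - ((\<Sum>k\<in>UNIV. dC a k i j * w k) + (\<Sum>k\<in>UNIV. C k i j * dw a k)) = RHS a i j"
    unfolding ddw_def dC_def w_def C_def dw_def RHS_def dph_def h_def g_def ph_def dg_def
    using T1[OF x] by (simp add: sum.distrib)
  have Cl: "\<And>a i j. ddw a i j = ddw i a j" unfolding ddw_def using ddw_comm[OF x] by simp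
  have Csym: "\<And>k i j. C k i j = C k j i" unfolding C_def using chr_sym[OF x] by simp
  have gsym: "\<And>i j. g i j = g j i" unfolding g_def using Gsym[OF x] by simp
  have hsym: "\<And>i j. h i j = h j i" unfolding h_def using gsym by simp
  have dG': "\<And>a i j. dg a i j = gm i a j + gm j a i" unfolding dg_def gm_def using dG_gam[OF x] by simp
  have gmsym: "\<And>l i j. gm l i j = gm l j i" unfolding gm_def using gam_sym[OF x] by simp
  have Gchr: "\<And>l i j. (\<Sum>k\<in>UNIV. g l k * C k i j) = gm l i j" unfolding g_def C_def gm_def using G_chr[OF x] by simp
  have Rup: "\<And>e. riemann_up G x e j a i = dC a e i j - dC i e a j + (\<Sum>f\<in>UNIV. C e a f * C f i j - C e i f * C f a j)"
    unfolding riemann_up_def dC_def C_def by simp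
  define QQ1 where "QQ1 = (\<Sum>k\<in>UNIV. C k i j * (\<Sum>l\<in>UNIV. C l a k * w l))"
  define QQ2 where "QQ2 = (\<Sum>k\<in>UNIV. C k a j * (\<Sum>l\<in>UNIV. C l i k * w l))"
  have S_dC: "(\<Sum>e\<in>UNIV. w e * (dC a e i j - dC i e a j))
      = (\<Sum>k\<in>UNIV. C k a j * dw i k) - (\<Sum>k\<in>UNIV. C k i j * dw a k) - (RHS a i j - RHS i a j)"
  proof -
    have "(\<Sum>e\<in>UNIV. w e * (dC a e i j - dC i e a j)) = (\<Sum>k\<in>UNIV. dC a k i j * w k) - (\<Sum>k\<in>UNIV. dC i k a j * w k)"
      by (simp add: sum_subtractf algebra_simps)
    then show ?thesis using T1'[of a i j] T1'[of i a j] Cl[of a i j] by linarith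
  qed
  have S_quad: "(\<Sum>e\<in>UNIV. w e * (\<Sum>f\<in>UNIV. C e a f * C f i j - C e i f * C f a j)) = QQ1 - QQ2"
  proof -
    have "QQ1 = (\<Sum>e\<in>UNIV. \<Sum>f\<in>UNIV. w e * (C e a f * C f i j))"
      unfolding QQ1_def by (subst sum.swap) (simp add: sum_distrib_left mult_ac)
    moreover have "QQ2 = (\<Sum>e\<in>UNIV. \<Sum>f\<in>UNIV. w e * (C e i f * C f a j))"
      unfolding QQ2_def by (subst sum.swap) (simp add: sum_distrib_left mult_ac)
    ultimately show ?thesis by (simp add: sum_distrib_left right_diff_distrib sum_subtractf)
  qed
  have S_dw1: "(\<Sum>k\<in>UNIV. C k i j * dw a k) = ph * (\<Sum>k\<in>UNIV. C k i j * h a k) + QQ1"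
    unfolding QQ1_def T0' by (simp add: algebra_simps sum.distrib sum_distrib_left)
  have S_dw2: "(\<Sum>k\<in>UNIV. C k a j * dw i k) = ph * (\<Sum>k\<in>UNIV. C k a j * h i k) + QQ2"
    unfolding QQ2_def T0' by (simp add: algebra_simps sum.distrib sum_distrib_left)
  have S_h: "\<And>a i j. (\<Sum>k\<in>UNIV. C k i j * h a k) = gm a i j + w a * (dw i j - ph * h i j)"
  proof -
    fix a i j
    have "(\<Sum>k\<in>UNIV. C k i j * h a k) = (\<Sum>k\<in>UNIV. g a k * C k i j) + w a * (\<Sum>k\<in>UNIV. C k i j * w k)"
      unfolding h_def by (simp add: algebra_simps sum.distrib sum_distrib_left)
    then show "(\<Sum>k\<in>UNIV. C k i j * h a k) = gm a i j + w a * (dw i j - ph * h i j)"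
      using Gchr T0'[of i j] by simp
  qed
  have S_dwsym: "dw a i = dw i a" using T0'[of a i] T0'[of i a] hsym[of a i] Csym by simp
  have S_dg: "dg a i j - dg i a j = gm i a j - gm a i j"
    using dG'[of a i j] dG'[of i a j] gmsym[of j a i] by simp
  have "(\<Sum>e\<in>UNIV. w e * riemann_up G x e j a i)
     = (\<Sum>e\<in>UNIV. w e * (dC a e i j - dC i e a j)) + (\<Sum>e\<in>UNIV. w e * (\<Sum>f\<in>UNIV. C e a f * C f i j - C e i f * C f a j))"
    unfolding Rup sum.distrib[symmetric] by (rule sum.cong[OF refl]) (simp add: algebra_simps)
  also have "\<dots> = (\<Sum>k\<in>UNIV. C k a j * dw i k) - (\<Sum>k\<in>UNIV. C k i j * dw a k) - (RHS a i j - RHS i a j) + (QQ1 - QQ2)"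
    using S_dC S_quad by simp
  also have "\<dots> = ph * (gm i a j + w i * (dw a j - ph * h a j)) - ph * (gm a i j + w a * (dw i j - ph * h i j))
      - (RHS a i j - RHS i a j)"
    using S_dw1 S_dw2 by (simp add: S_h)
  also have "\<dots> = - (dph a - ph\<^sup>2 * w a) * h i j + (dph i - ph\<^sup>2 * w i) * h a j"
  proof -
    have "RHS a i j - RHS i a j = dph a * h i j - dph i * h a j
         + ph * ((gm i a j - gm a i j) + w i * dw a j - w a * dw i j)"
    proof -
      have S_dg': "dg a i j = dg i a j + (gm i a j - gm a i j)" using S_dg by simp
      show ?thesis unfolding RHS_def S_dg' using S_dwsym hsym[of a j] by (simp add: algebra_simps)
    qed
    then show ?thesis by (simp add: algebra_simps power2_eq_square)
  qed
  finally show ?thesis unfolding w_def dph_def ph_def h_def g_def by (simp add: hsym)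
qed

end

locale walg =
  fixes g gi :: "4 \<Rightarrow> 4 \<Rightarrow> real" and Rup R C :: "4 \<Rightarrow> 4 \<Rightarrow> 4 \<Rightarrow> 4 \<Rightarrow> real"
    and u w \<psi> :: "4 \<Rightarrow> real" and ric :: "4 \<Rightarrow> 4 \<Rightarrow> real" and S :: real
  assumes gsym: "g i j = g j i" and gisym: "gi i j = gi j i"
    and g_gi: "(\<Sum>k\<in>UNIV. g i k * gi k j) = (if i = j then 1 else 0)"
    and gi_g: "(\<Sum>k\<in>UNIV. gi i k * g k j) = (if i = j then 1 else 0)"
    and R_def: "R a b c d = (\<Sum>e\<in>UNIV. g a e * Rup e b c d)"
    and Rup_cd: "Rup a b c d = - Rup a b d c"
    and bianchi_up: "Rup a b c d + Rup a c d b + Rup a d b c = 0"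
    and R_ab: "R a b c d = - R b a c d"
    and ric_def: "ric b d = (\<Sum>a\<in>UNIV. Rup a b a d)"
    and S_def: "S = (\<Sum>b\<in>UNIV. \<Sum>d\<in>UNIV. gi b d * ric b d)"
    and C_def: "C a b c d = R a b c d
     - (1/2) * (g a c * ric b d - g a d * ric b c + g b d * ric a c - g b c * ric a d)
     + (S / 6) * (g a c * g b d - g a d * g b c)"
    and w_def: "w k = (\<Sum>j\<in>UNIV. g k j * u j)"
    and unit: "(\<Sum>k\<in>UNIV. w k * u k) = -1"
    and Xup: "(\<Sum>e\<in>UNIV. w e * Rup e j a i) = - \<psi> a * (g i j + w i * w j) + \<psi> i * (g a j + w a * w j)"
begin

lemma R_cd: "R a b c d = - R a b d c"
  unfolding R_def by (subst Rup_cd) (simp add: sum_negf)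

lemma R_bianchi: "R a b c d + R a c d b + R a d b c = 0"
proof -
  have "R a b c d + R a c d b + R a d b c = (\<Sum>e\<in>UNIV. g a e * (Rup e b c d + Rup e c d b + Rup e d b c))"
    unfolding R_def by (simp add: sum.distrib distrib_left)
  then show ?thesis by (simp add: bianchi_up)
qed

lemma R_pair: "R a b c d = R c d a b"
proof -
  have B1: "R a b c d + R a c d b + R a d b c = 0" by (rule R_bianchi)
  have B2: "R b c d a + R b d a c + R b a c d = 0" by (rule R_bianchi)
  have B3: "R c d a b + R c a b d + R c b d a = 0" by (rule R_bianchi)
  have B4: "R d a b c + R d b c a + R d c a b = 0" by (rule R_bianchi)
  have "R b a c d = - R a b c d" "R d c a b = - R c d a b" "R c a b d = - R a c b d" "R a c b d = - R a c d b"
    "R d a b c = - R a d b c" "R c b d a = - R b c d a" "R d b c a = - R b d c a" "R b d c a = - R b d a c"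
    using R_ab[of b a c d] R_ab[of d c a b] R_ab[of c a b d] R_cd[of a c b d] R_ab[of d a b c]
      R_ab[of c b d a] R_ab[of d b c a] R_cd[of b d c a] by simp_all
  then show ?thesis using B1 B2 B3 B4 by linarith
qed

lemma delta_sum: "(\<Sum>k\<in>UNIV. (if i = k then 1 else 0) * f k) = (f (i::4) :: real)"
proof -
  have "\<And>k. (if i = k then 1 else 0) * f k = (if i = k then f k else 0)" by simp
  then show ?thesis by (simp add: sum.delta')
qed

lemma delta_sum': "(\<Sum>k\<in>UNIV. (if k = i then 1 else 0) * f k) = (f (i::4) :: real)"
proof -
  have "\<And>k. (if k = i then 1 else 0) * f k = (if i = k then f k else 0)" by auto
  then show ?thesis by (simp add: sum.delta')
qed

lemma Rup_R: "Rup a b c d = (\<Sum>e\<in>UNIV. gi a e * R e b c d)"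
proof -
  have "(\<Sum>e\<in>UNIV. gi a e * R e b c d) = (\<Sum>e\<in>UNIV. \<Sum>f\<in>UNIV. gi a e * g e f * Rup f b c d)"
    unfolding R_def by (simp add: sum_distrib_left mult.assoc)
  also have "\<dots> = (\<Sum>f\<in>UNIV. (\<Sum>e\<in>UNIV. gi a e * g e f) * Rup f b c d)"
    by (subst sum.swap) (simp add: sum_distrib_right)
  also have "\<dots> = Rup a b c d" by (simp add: gi_g delta_sum)
  finally show ?thesis by simp
qed

lemma ric_R: "ric b d = (\<Sum>a\<in>UNIV. \<Sum>c\<in>UNIV. gi a c * R a b c d)"
proof -
  have "ric b d = (\<Sum>c\<in>UNIV. \<Sum>a\<in>UNIV. gi c a * R a b c d)"
    unfolding ric_def Rup_R by simp
  also have "\<dots> = (\<Sum>a\<in>UNIV. \<Sum>c\<in>UNIV. gi a c * R a b c d)"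
    by (subst sum.swap) (simp add: gisym)
  finally show ?thesis .
qed

lemma ric_sym: "ric b d = ric d b"
proof -
  have "ric b d = (\<Sum>a\<in>UNIV. \<Sum>c\<in>UNIV. gi a c * R c d a b)"
  proof -
    have "\<And>a c. R a b c d = R c d a b" by (rule R_pair)
    then show ?thesis unfolding ric_R by (simp only:)
  qed
  also have "\<dots> = (\<Sum>c\<in>UNIV. \<Sum>a\<in>UNIV. gi c a * R c d a b)"
    by (subst sum.swap) (simp add: gisym)
  also have "\<dots> = ric d b" unfolding ric_R by simp
  finally show ?thesis .
qed

lemma C_ab: "C a b c d = - C b a c d"
  unfolding C_def using R_ab[of a b c d] by (simp add: algebra_simps)

lemma C_cd: "C a b c d = - C a b d c"
  unfolding C_def using R_cd[of a b c d] by (simp add: algebra_simps)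

lemma C_pair: "C a b c d = C c d a b"
  unfolding C_def using R_pair[of a b c d] gsym[of a c] gsym[of b d] gsym[of a d] gsym[of b c]
    ric_sym[of b d] ric_sym[of a c] ric_sym[of b c] ric_sym[of a d]
  by (simp add: algebra_simps)

end

context walg begin

lemma gig_sum: "(\<Sum>a\<in>UNIV. gi c a * g a d) = (if c = d then 1 else 0)" by (rule gi_g)

lemma gi_w: "(\<Sum>c\<in>UNIV. gi a c * w c) = u a"
proof -
  have "(\<Sum>c\<in>UNIV. gi a c * w c) = (\<Sum>j\<in>UNIV. (\<Sum>c\<in>UNIV. gi a c * g c j) * u j)"
  proof -
    have "(\<Sum>c\<in>UNIV. gi a c * w c) = (\<Sum>c\<in>UNIV. \<Sum>j\<in>UNIV. gi a c * g c j * u j)"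
      unfolding w_def by (simp add: sum_distrib_left mult.assoc)
    also have "\<dots> = (\<Sum>j\<in>UNIV. \<Sum>c\<in>UNIV. gi a c * g c j * u j)" by (rule sum.swap)
    also have "\<dots> = (\<Sum>j\<in>UNIV. (\<Sum>c\<in>UNIV. gi a c * g c j) * u j)" by (simp add: sum_distrib_right)
    finally show ?thesis .
  qed
  also have "\<dots> = u a" by (simp add: gi_g delta_sum)
  finally show ?thesis .
qed

lemma trace_gg: "(\<Sum>a\<in>UNIV. \<Sum>c\<in>UNIV. gi a c * g a c) = 4"
proof -
  have "(\<Sum>a\<in>UNIV. \<Sum>c\<in>UNIV. gi a c * g a c) = (\<Sum>a\<in>UNIV. (\<Sum>c\<in>UNIV. gi a c * g c a))"
    by (rule sum.cong[OF refl])+ (metis gsym)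
  also have "\<dots> = (\<Sum>a\<in>(UNIV::4 set). 1)" by (simp add: gi_g)
  finally show ?thesis by simp
qed

lemma C_trace: "(\<Sum>a\<in>UNIV. \<Sum>c\<in>UNIV. gi a c * C a b c d) = 0"
proof -
  define T1 where "T1 = (\<Sum>a\<in>UNIV. \<Sum>c\<in>UNIV. gi a c * R a b c d)"
  define T2 where "T2 = (\<Sum>a\<in>UNIV. \<Sum>c\<in>UNIV. gi a c * (g a c * ric b d))"
  define T3 where "T3 = (\<Sum>a\<in>UNIV. \<Sum>c\<in>UNIV. gi a c * (g a d * ric b c))"
  define T4 where "T4 = (\<Sum>a\<in>UNIV. \<Sum>c\<in>UNIV. gi a c * (g b d * ric a c))"
  define T5 where "T5 = (\<Sum>a\<in>UNIV. \<Sum>c\<in>UNIV. gi a c * (g b c * ric a d))"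
  define T6 where "T6 = (\<Sum>a\<in>UNIV. \<Sum>c\<in>UNIV. gi a c * (g a c * g b d))"
  define T7 where "T7 = (\<Sum>a\<in>UNIV. \<Sum>c\<in>UNIV. gi a c * (g a d * g b c))"
  have e0: "(\<Sum>a\<in>UNIV. \<Sum>c\<in>UNIV. gi a c * C a b c d) = T1 - 1/2 * (T2 - T3 + T4 - T5) + S/6 * (T6 - T7)"
    unfolding C_def T1_def T2_def T3_def T4_def T5_def T6_def T7_def
    by (simp add: algebra_simps sum.distrib sum_subtractf sum_distrib_left)
  have t1: "T1 = ric b d" unfolding T1_def ric_R ..
  have t2: "T2 = 4 * ric b d"
    unfolding T2_def using trace_gg by (simp add: mult.assoc[symmetric] sum_distrib_right[symmetric])
  have t3: "T3 = ric b d"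
  proof -
    have "T3 = (\<Sum>c\<in>UNIV. (\<Sum>a\<in>UNIV. gi c a * g a d) * ric b c)"
      unfolding T3_def by (subst sum.swap) (simp add: sum_distrib_right gisym mult.assoc)
    then show ?thesis by (simp add: gig_sum delta_sum')
  qed
  have t4: "T4 = g b d * S"
    unfolding T4_def S_def by (simp add: sum_distrib_left mult_ac)
  have t5: "T5 = ric b d"
  proof -
    have "T5 = (\<Sum>a\<in>UNIV. (\<Sum>c\<in>UNIV. gi a c * g c b) * ric a d)"
    proof -
      have "T5 = (\<Sum>a\<in>UNIV. \<Sum>c\<in>UNIV. gi a c * g c b * ric a d)"
        unfolding T5_def by (rule sum.cong[OF refl])+ (metis gsym mult.assoc)
      then show ?thesis by (simp add: sum_distrib_right)
    qed
    then show ?thesis by (simp add: gi_g delta_sum')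
  qed
  have t6: "T6 = 4 * g b d"
    unfolding T6_def using trace_gg by (simp add: mult.assoc[symmetric] sum_distrib_right[symmetric])
  have t7: "T7 = g b d"
  proof -
    have "T7 = (\<Sum>c\<in>UNIV. (\<Sum>a\<in>UNIV. gi c a * g a d) * g b c)"
      unfolding T7_def by (subst sum.swap) (simp add: sum_distrib_right gisym mult.assoc)
    then show ?thesis using gsym[of b d] by (simp add: gig_sum delta_sum')
  qed
  show ?thesis unfolding e0 t1 t2 t3 t4 t5 t6 t7 by (simp add: algebra_simps)
qed

end

context walg begin

definition h where "h i j = g i j + w i * w j"
definition p where "p = (\<Sum>a\<in>UNIV. u a * \<psi> a)"

lemma u_R: "(\<Sum>k\<in>UNIV. u k * R k j a i) = (\<Sum>e\<in>UNIV. w e * Rup e j a i)"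
proof -
  have "(\<Sum>k\<in>UNIV. u k * R k j a i) = (\<Sum>k\<in>UNIV. \<Sum>e\<in>UNIV. u k * g k e * Rup e j a i)"
    unfolding R_def by (simp add: sum_distrib_left mult.assoc)
  also have "\<dots> = (\<Sum>e\<in>UNIV. \<Sum>k\<in>UNIV. u k * g k e * Rup e j a i)" by (rule sum.swap)
  also have "\<dots> = (\<Sum>e\<in>UNIV. (\<Sum>k\<in>UNIV. g e k * u k) * Rup e j a i)"
    by (rule sum.cong[OF refl], unfold sum_distrib_right, rule sum.cong[OF refl]) (metis gsym mult.commute)
  finally show ?thesis unfolding w_def .
qed

lemma Xl: "(\<Sum>d\<in>UNIV. R a b c d * u d) = \<psi> a * h b c - \<psi> b * h a c"
proof -
  have "\<And>d. R a b c d = - R d c a b" using R_pair[of a b c] R_ab by (metis)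
  then have "(\<Sum>d\<in>UNIV. R a b c d * u d) = - (\<Sum>d\<in>UNIV. u d * R d c a b)"
    by (simp add: sum_negf mult.commute)
  also have "\<dots> = \<psi> a * h b c - \<psi> b * h a c"
    unfolding u_R Xup h_def using gsym[of b c] gsym[of a c] by (simp add: algebra_simps)
  finally show ?thesis .
qed

lemma u_w: "(\<Sum>a\<in>UNIV. u a * w a) = -1" using unit by (simp add: mult.commute)

lemma g_u: "(\<Sum>d\<in>UNIV. g a d * u d) = w a" unfolding w_def ..

lemma u_g: "(\<Sum>a\<in>UNIV. u a * g a c) = w c"
  unfolding w_def by (rule sum.cong[OF refl]) (metis gsym mult.commute)

lemma gih1: "(\<Sum>c\<in>UNIV. gi a c * h b c) = (if a = b then 1 else 0) + w b * u a"
proof -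
  have "(\<Sum>c\<in>UNIV. gi a c * h b c) = (\<Sum>c\<in>UNIV. gi a c * g c b) + w b * (\<Sum>c\<in>UNIV. gi a c * w c)"
    unfolding h_def by (simp add: algebra_simps sum.distrib sum_distrib_left gsym[of b])
  then show ?thesis by (simp add: gi_g gi_w)
qed

lemma gih2: "(\<Sum>a\<in>UNIV. \<Sum>c\<in>UNIV. gi a c * h a c) = 3"
proof -
  have "(\<Sum>a\<in>UNIV. \<Sum>c\<in>UNIV. gi a c * h a c) = (\<Sum>a\<in>UNIV. \<Sum>c\<in>UNIV. gi a c * g a c) + (\<Sum>a\<in>UNIV. (\<Sum>c\<in>UNIV. gi a c * w c) * w a)"
    unfolding h_def by (simp add: algebra_simps sum.distrib sum_distrib_left sum_distrib_right)
  then show ?thesis by (simp add: trace_gg gi_w u_w)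
qed

lemma Ru: "(\<Sum>d\<in>UNIV. ric b d * u d) = - 2 * \<psi> b + w b * p"
proof -
  have "(\<Sum>d\<in>UNIV. ric b d * u d) = (\<Sum>d\<in>UNIV. \<Sum>a\<in>UNIV. \<Sum>c\<in>UNIV. gi a c * R a b c d * u d)"
    unfolding ric_R by (simp add: sum_distrib_right)
  also have "\<dots> = (\<Sum>a\<in>UNIV. \<Sum>c\<in>UNIV. gi a c * (\<Sum>d\<in>UNIV. R a b c d * u d))"
  proof -
    have "(\<Sum>d\<in>UNIV. \<Sum>a\<in>UNIV. \<Sum>c\<in>UNIV. gi a c * R a b c d * u d)
        = (\<Sum>a\<in>UNIV. \<Sum>d\<in>UNIV. \<Sum>c\<in>UNIV. gi a c * R a b c d * u d)" by (rule sum.swap)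
    also have "\<dots> = (\<Sum>a\<in>UNIV. \<Sum>c\<in>UNIV. \<Sum>d\<in>UNIV. gi a c * R a b c d * u d)"
      by (rule sum.cong[OF refl], rule sum.swap)
    finally show ?thesis by (simp add: sum_distrib_left mult.assoc)
  qed
  also have "\<dots> = (\<Sum>a\<in>UNIV. \<Sum>c\<in>UNIV. gi a c * (\<psi> a * h b c - \<psi> b * h a c))"
    by (simp add: Xl)
  also have "\<dots> = (\<Sum>a\<in>UNIV. \<psi> a * (\<Sum>c\<in>UNIV. gi a c * h b c)) - \<psi> b * (\<Sum>a\<in>UNIV. \<Sum>c\<in>UNIV. gi a c * h a c)"
    by (simp add: right_diff_distrib sum_subtractf sum_distrib_left mult_ac)
  also have "\<dots> = (\<Sum>a\<in>UNIV. \<psi> a * ((if a = b then 1 else 0) + w b * u a)) - \<psi> b * 3"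
    unfolding gih2 by (simp add: gih1)
  also have "\<dots> = \<psi> b + w b * p - 3 * \<psi> b"
  proof -
    have "\<And>a. \<psi> a * ((if a = b then 1 else 0) + w b * u a) = (if a = b then 1 else 0) * \<psi> a + w b * (u a * \<psi> a)"
      by (simp add: algebra_simps)
    then show ?thesis by (simp add: sum.distrib delta_sum' p_def sum_distrib_left[symmetric])
  qed
  finally show ?thesis by simp
qed

lemma Y_formula: "(\<Sum>d\<in>UNIV. C a b c d * u d) =
   (\<psi> a * h b c - \<psi> b * h a c)
   - (1/2) * (g a c * (- 2 * \<psi> b + w b * p) - w a * ric b c + w b * ric a c - g b c * (- 2 * \<psi> a + w a * p))
   + (S / 6) * (g a c * w b - w a * g b c)"
proof -
  have "(\<Sum>d\<in>UNIV. C a b c d * u d) = (\<Sum>d\<in>UNIV. R a b c d * u d)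
     - (1/2) * (g a c * (\<Sum>d\<in>UNIV. ric b d * u d) - (\<Sum>d\<in>UNIV. g a d * u d) * ric b c
                + (\<Sum>d\<in>UNIV. g b d * u d) * ric a c - g b c * (\<Sum>d\<in>UNIV. ric a d * u d))
     + (S / 6) * (g a c * (\<Sum>d\<in>UNIV. g b d * u d) - (\<Sum>d\<in>UNIV. g a d * u d) * g b c)"
    unfolding C_def by (simp add: algebra_simps sum.distrib sum_subtractf sum_distrib_left sum_distrib_right)
  then show ?thesis unfolding Xl Ru g_u by simp
qed

lemma uY: assumes E: "\<forall>a d. (\<Sum>b\<in>UNIV. \<Sum>c\<in>UNIV. u b * u c * C a b c d) = 0"
  shows "(\<Sum>a\<in>UNIV. u a * (\<Sum>d\<in>UNIV. C a b c d * u d)) = 0"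
proof -
  have "(\<Sum>a\<in>UNIV. u a * (\<Sum>d\<in>UNIV. C a b c d * u d)) = (\<Sum>a\<in>UNIV. \<Sum>d\<in>UNIV. u a * u d * C c d a b)"
  proof -
    have "(\<Sum>a\<in>UNIV. u a * (\<Sum>d\<in>UNIV. C a b c d * u d)) = (\<Sum>a\<in>UNIV. \<Sum>d\<in>UNIV. u a * (C a b c d * u d))"
      by (simp add: sum_distrib_left)
    also have "\<dots> = (\<Sum>a\<in>UNIV. \<Sum>d\<in>UNIV. u a * u d * C c d a b)"
      by (rule sum.cong[OF refl])+ (metis C_pair mult.commute mult.assoc)
    finally show ?thesis .
  qed
  also have "\<dots> = (\<Sum>d\<in>UNIV. \<Sum>a\<in>UNIV. u d * u a * C c d a b)"
    by (subst sum.swap) (simp add: mult_ac)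
  also have "\<dots> = 0" using E by blast
  finally show ?thesis .
qed

end

lemma lin_solve:
  fixes A B R D E F :: real
  shows "0 = A - 1/2 * (B + R + D + E) + F \<Longrightarrow> R = 2 * A - B - D - E + 2 * F"
  by (simp add: field_simps)

context walg begin

lemma uh: "(\<Sum>a\<in>UNIV. u a * h a c) = 0"
proof -
  have "(\<Sum>a\<in>UNIV. u a * h a c) = (\<Sum>a\<in>UNIV. u a * g a c) + (\<Sum>a\<in>UNIV. u a * w a) * w c"
    unfolding h_def by (simp add: sum4 algebra_simps)
  then show ?thesis by (simp add: u_g u_w)
qed

lemma uric: "(\<Sum>a\<in>UNIV. u a * ric a c) = - 2 * \<psi> c + w c * p"
proof -
  have "(\<Sum>a\<in>UNIV. u a * ric a c) = (\<Sum>a\<in>UNIV. ric c a * u a)"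
    by (rule sum.cong[OF refl]) (metis ric_sym mult.commute)
  then show ?thesis by (simp add: Ru)
qed

lemma upsi: "(\<Sum>a\<in>UNIV. u a * (- 2 * \<psi> a + w a * p)) = - 3 * p"
proof -
  have "(\<Sum>a\<in>UNIV. u a * (- 2 * \<psi> a + w a * p)) = - 2 * (\<Sum>a\<in>UNIV. u a * \<psi> a) + (\<Sum>a\<in>UNIV. u a * w a) * p"
    by (simp add: sum4 algebra_simps)
  then show ?thesis by (simp add: u_w p_def)
qed

lemma ric_formula:
  assumes E: "\<forall>a d. (\<Sum>b\<in>UNIV. \<Sum>c\<in>UNIV. u b * u c * C a b c d) = 0"
  shows "ric b c = 2 * (p * h b c) - w c * (- 2 * \<psi> b + w b * p) - w b * (- 2 * \<psi> c + w c * p)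
           - 3 * p * g b c + 2 * ((S / 6) * (w c * w b + g b c))"
proof -
  define A1 where "A1 = (\<lambda>a. u a * \<psi> a)"
  define A2 where "A2 = (\<lambda>a. u a * h a c)"
  define A3 where "A3 = (\<lambda>a. u a * g a c)"
  define A4 where "A4 = (\<lambda>a. u a * w a)"
  define A5 where "A5 = (\<lambda>a. u a * ric a c)"
  define A6 where "A6 = (\<lambda>a. u a * (- 2 * \<psi> a + w a * p))"
  define X1 where "X1 = - 2 * \<psi> b + w b * p"
  have pw: "\<And>a. u a * (\<Sum>d\<in>UNIV. C a b c d * u d) = A1 a * h b c - \<psi> b * A2 a
     - (1/2) * (A3 a * X1 - A4 a * ric b c + w b * A5 a - g b c * A6 a)
     + (S / 6) * (A3 a * w b - A4 a * g b c)"
    unfolding Y_formula A1_def A2_def A3_def A4_def A5_def A6_def X1_def by (simp add: algebra_simps)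
  have "0 = (\<Sum>a\<in>UNIV. u a * (\<Sum>d\<in>UNIV. C a b c d * u d))" using uY[OF E] by simp
  also have "\<dots> = sum A1 UNIV * h b c - \<psi> b * sum A2 UNIV
     - (1/2) * (sum A3 UNIV * X1 - sum A4 UNIV * ric b c + w b * sum A5 UNIV - g b c * sum A6 UNIV)
     + (S / 6) * (sum A3 UNIV * w b - sum A4 UNIV * g b c)"
    unfolding pw by (simp only: sum.distrib sum_subtractf sum_distrib_left[symmetric] sum_distrib_right[symmetric])
  also have "\<dots> = p * h b c - (1/2) * (w c * X1 + ric b c + w b * (- 2 * \<psi> c + w c * p) + 3 * p * g b c)
     + (S / 6) * (w c * w b + g b c)"
  proof -
    have s1: "sum A1 UNIV = p" unfolding A1_def p_def ..
    have s2: "sum A2 UNIV = 0" unfolding A2_def by (rule uh)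
    have s3: "sum A3 UNIV = w c" unfolding A3_def by (rule u_g)
    have s4: "sum A4 UNIV = -1" unfolding A4_def by (rule u_w)
    have s5: "sum A5 UNIV = - 2 * \<psi> c + w c * p" unfolding A5_def by (rule uric)
    have s6: "sum A6 UNIV = - 3 * p" unfolding A6_def by (rule upsi)
    show ?thesis unfolding s1 s2 s3 s4 s5 s6 by (simp add: algebra_simps)
  qed
  finally have eq0: "0 = p * h b c - (1/2) * (w c * X1 + ric b c + w b * (- 2 * \<psi> c + w c * p) + 3 * p * g b c)
     + (S / 6) * (w c * w b + g b c)" .
  show ?thesis using lin_solve[OF eq0] unfolding X1_def .
qed

lemma Y_zero:
  assumes E: "\<forall>a d. (\<Sum>b\<in>UNIV. \<Sum>c\<in>UNIV. u b * u c * C a b c d) = 0"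
  shows "(\<Sum>d\<in>UNIV. C a b c d * u d) = 0"
  unfolding Y_formula ric_formula[OF E] h_def
  by (simp add: field_simps)

end

lemma all4: "(\<forall>i::4. P i) \<longleftrightarrow> P 0 \<and> P 1 \<and> P 2 \<and> P 3"
  by (metis UNIV4 UNIV_I insertE singletonD)

definition boostm :: "real^4 \<Rightarrow> real^4^4" where
  "boostm w = (\<chi> i j. if i = 0 \<and> j = 0 then w$0 else if i = 0 then w$j else if j = 0 then w$i
      else (if i = j then 1 else 0) + w$i * w$j * inverse (1 + w$0))"

lemma boost_ok:
  fixes w :: "real^4"
  assumes rel: "w$0 * w$0 = 1 + w$1 * w$1 + w$2 * w$2 + w$3 * w$3" and pos: "w$0 > 0"
  shows "transpose (boostm w) ** minkowski ** boostm w = minkowski"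
proof -
  define t where "t = inverse (1 + w$0)"
  have t: "t * (1 + w$0) = 1" unfolding t_def using pos by simp
  have "\<forall>a b. (transpose (boostm w) ** minkowski ** boostm w) $ a $ b = minkowski $ a $ b"
    unfolding all4 matrix_matrix_mult_def transpose_def minkowski_def boostm_def
    apply (simp add: sum4 flip: t_def)
    apply (intro conjI)
    apply (use rel t in algebra)+
    done
  then show ?thesis by (simp add: vec_eq_iff)
qed


lemma qf_transpose:
  fixes P :: "real^4^4"
  shows "(\<Sum>k\<in>UNIV. (transpose P *v y) $ k * v $ k) = (\<Sum>j\<in>UNIV. y $ j * (P *v v) $ j)"
proof -
  have "(\<Sum>k\<in>UNIV. (transpose P *v y) $ k * v $ k) = (\<Sum>k\<in>UNIV. \<Sum>j\<in>UNIV. P$j$k * y$j * v$k)"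
    by (simp add: matrix_vector_mult_def transpose_def sum_distrib_right)
  also have "\<dots> = (\<Sum>j\<in>UNIV. \<Sum>k\<in>UNIV. P$j$k * y$j * v$k)" by (rule sum.swap)
  also have "\<dots> = (\<Sum>j\<in>UNIV. y $ j * (P *v v) $ j)"
    by (simp add: matrix_vector_mult_def sum_distrib_left mult_ac)
  finally show ?thesis .
qed

lemma qf_congr:
  fixes P A :: "real^4^4"
  shows "(\<Sum>k\<in>UNIV. ((transpose P ** A ** P) *v v) $ k * v $ k)
       = (\<Sum>k\<in>UNIV. (A *v (P *v v)) $ k * (P *v v) $ k)"
proof -
  have e: "(transpose P ** A ** P) *v v = transpose P *v (A *v (P *v v))"
    by (simp add: matrix_vector_mul_assoc matrix_mul_assoc del: transpose_matrix_vector)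
  show ?thesis unfolding e by (rule qf_transpose)
qed

lemma mink_qf: "(\<Sum>k\<in>UNIV. (minkowski *v v) $ k * v $ k) = - (v$0 * v$0) + v$1 * v$1 + v$2 * v$2 + v$3 * v$3"
  by (simp add: matrix_vector_mult_def minkowski_def sum4)

lemma frame_exists:
  fixes A :: "real^4^4" and uv :: "real^4"
  assumes lor: "lorentzian_matrix A" and un: "(\<Sum>k\<in>UNIV. (A *v uv) $ k * uv $ k) = -1"
  shows "\<exists>Q s. transpose Q ** A ** Q = minkowski \<and> (s = 1 \<or> s = -1) \<and> (\<forall>i. Q$i$0 = s * uv$i)"
proof -
  obtain P where P: "invertible P" "transpose P ** A ** P = minkowski"
    using lor unfolding lorentzian_matrix_def by blast
  have dP: "det P \<noteq> 0" using P(1) invertible_det_nz by blast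
  define v where "v = matrix_inv P *v uv"
  have Pv: "P *v v = uv" unfolding v_def
    by (simp add: matrix_vector_mul_assoc inv_props(1)[OF dP])
  have nv: "- (v$0 * v$0) + v$1 * v$1 + v$2 * v$2 + v$3 * v$3 = -1"
    using qf_congr[of P A v] P(2) un Pv mink_qf by simp
  define s :: real where "s = (if v$0 > 0 then 1 else -1)"
  have s: "s = 1 \<or> s = -1" "s * s = 1" unfolding s_def by auto
  define w where "w = s *\<^sub>R v"
  have v0: "v$0 \<noteq> 0"
  proof
    assume "v$0 = 0"
    then have "v$1 * v$1 + v$2 * v$2 + v$3 * v$3 = -1" using nv by simp
    moreover have "v$1 * v$1 + v$2 * v$2 + v$3 * v$3 \<ge> 0" by simp
    ultimately show False by linarith
  qed
  have w0: "w$0 > 0" unfolding w_def s_def using v0 by auto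
  have relw: "w$0 * w$0 = 1 + w$1 * w$1 + w$2 * w$2 + w$3 * w$3"
  proof -
    have "w$i * w$i = v$i * v$i" for i unfolding w_def using s(2)
      by (simp add: algebra_simps)
    then show ?thesis using nv by simp
  qed
  define L where "L = boostm w"
  have L: "transpose L ** minkowski ** L = minkowski" unfolding L_def by (rule boost_ok[OF relw w0])
  have L0: "L$i$0 = w$i" for i unfolding L_def boostm_def by simp
  define Q where "Q = P ** L"
  have "transpose Q ** A ** Q = transpose L ** (transpose P ** A ** P) ** L"
    unfolding Q_def by (simp add: matrix_transpose_mul matrix_mul_assoc)
  then have Q1: "transpose Q ** A ** Q = minkowski" using P(2) L by simp
  have Q0: "Q$i$0 = s * uv$i" for i
  proof -
    have "Q$i$0 = (\<Sum>k\<in>UNIV. P$i$k * (s * v$k))"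
      unfolding Q_def by (simp add: matrix_matrix_mult_def L0 w_def)
    also have "\<dots> = s * (P *v v)$i" by (simp add: matrix_vector_mult_def sum_distrib_left mult_ac)
    finally show ?thesis using Pv by simp
  qed
  show ?thesis using Q1 Q0 s(1) by blast
qed

lemma mink_sq: "minkowski ** minkowski = mat 1"
  by (simp add: vec_eq_iff matrix_matrix_mult_def minkowski_def mat_def sum4 all4)

lemma frame_inv:
  fixes A Q :: "real^4^4"
  assumes dA: "det A \<noteq> 0" and Q: "transpose Q ** A ** Q = minkowski"
  shows "Q ** minkowski ** transpose Q = matrix_inv A" "det Q \<noteq> 0"
proof -
  have "det (transpose Q ** A ** Q) = det Q * det A * det Q" by (simp add: det_mul)
  then show dQ: "det Q \<noteq> 0" using Q minkowski_det by auto
  have "(Q ** minkowski ** transpose Q ** A) ** Q = Q ** minkowski ** (transpose Q ** A ** Q)"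
    by (simp add: matrix_mul_assoc)
  also have "\<dots> = Q" using Q mink_sq by (simp add: matrix_mul_assoc[symmetric])
  finally have e: "(Q ** minkowski ** transpose Q ** A) ** Q = Q" .
  have "Q ** minkowski ** transpose Q ** A = (Q ** minkowski ** transpose Q ** A) ** (Q ** matrix_inv Q)"
    using inv_props(1)[OF dQ] by simp
  also have "\<dots> = Q ** matrix_inv Q" using e by (simp add: matrix_mul_assoc)
  finally have "Q ** minkowski ** transpose Q ** A = mat 1" using inv_props(1)[OF dQ] by simp
  then have "Q ** minkowski ** transpose Q = (Q ** minkowski ** transpose Q) ** (A ** matrix_inv A)"
    using inv_props(1)[OF dA] by simp
  also have "\<dots> = matrix_inv A"
    using \<open>Q ** minkowski ** transpose Q ** A = mat 1\<close> by (simp add: matrix_mul_assoc)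
  finally show "Q ** minkowski ** transpose Q = matrix_inv A" .
qed


lemma three_d:
  fixes W :: "4 \<Rightarrow> 4 \<Rightarrow> 4 \<Rightarrow> 4 \<Rightarrow> real"
  assumes ab: "\<And>a b c d. W a b c d = - W b a c d" and cd: "\<And>a b c d. W a b c d = - W a b d c"
    and z4: "\<And>a b c. W a b c 0 = 0" and z1: "\<And>b c d. W 0 b c d = 0"
    and tr: "\<And>b d. W 1 b 1 d + W 2 b 2 d + W 3 b 3 d = 0"
  shows "W a b c d = 0"
proof -
  have rep1: "\<And>a c d. W a a c d = 0" proof - fix a c d show "W a a c d = 0" using ab[of a a c d] by simp qed
  have rep2: "\<And>a b c. W a b c c = 0" proof - fix a b c show "W a b c c = 0" using cd[of a b c c] by simp qed
  have z3: "\<And>a b d. W a b 0 d = 0" proof - fix a b d show "W a b 0 d = 0" using cd[of a b 0 d] z4[of a b d] by simp qed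
  have z2: "\<And>a c d. W a 0 c d = 0" proof - fix a c d show "W a 0 c d = 0" using ab[of a 0 c d] z1[of a c d] by simp qed
  have s21: "\<And>c d. W 2 1 c d = - W 1 2 c d" by (rule ab)
  have s31: "\<And>c d. W 3 1 c d = - W 1 3 c d" by (rule ab)
  have s32: "\<And>c d. W 3 2 c d = - W 2 3 c d" by (rule ab)
  have t21: "\<And>a b. W a b 2 1 = - W a b 1 2" by (rule cd)
  have t31: "\<And>a b. W a b 3 1 = - W a b 1 3" by (rule cd)
  have t32: "\<And>a b. W a b 3 2 = - W a b 2 3" by (rule cd)
  note N = s21 s31 s32 t21 t31 t32 rep1 rep2 z1 z2 z3 z4
  have d1: "W 1 2 1 2 + W 1 3 1 3 = 0" using tr[of 1 1] by (simp add: N)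
  have d2: "W 1 2 1 2 + W 2 3 2 3 = 0" using tr[of 2 2] by (simp add: N)
  have d3: "W 1 3 1 3 + W 2 3 2 3 = 0" using tr[of 3 3] by (simp add: N)
  have c1: "W 1 2 1 2 = 0" "W 1 3 1 3 = 0" "W 2 3 2 3 = 0" using d1 d2 d3 by linarith+
  have o1: "W 1 2 1 3 = 0" using tr[of 2 3] by (simp add: N)
  have o2: "W 1 3 1 2 = 0" using tr[of 3 2] by (simp add: N)
  have o3: "W 1 2 2 3 = 0" using tr[of 1 3] by (simp add: N)
  have o4: "W 2 3 1 2 = 0" using tr[of 3 1] by (simp add: N)
  have o5: "W 1 3 2 3 = 0" using tr[of 1 2] by (simp add: N)
  have o6: "W 2 3 1 3 = 0" using tr[of 2 1] by (simp add: N)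
  have "\<forall>a b c d. W a b c d = 0"
    unfolding all4 by (simp add: N c1 o1 o2 o3 o4 o5 o6)
  then show ?thesis by blast
qed


lemma sum_inner:
  fixes f g :: "4 \<Rightarrow> real"
  shows "(\<Sum>i\<in>UNIV. f i * (\<Sum>j\<in>UNIV. g j * H i j)) = (\<Sum>j\<in>UNIV. g j * (\<Sum>i\<in>UNIV. f i * H i j))"
proof -
  have "(\<Sum>i\<in>UNIV. f i * (\<Sum>j\<in>UNIV. g j * H i j)) = (\<Sum>i\<in>UNIV. \<Sum>j\<in>UNIV. g j * (f i * H i j))"
    by (simp add: sum_distrib_left mult_ac)
  also have "\<dots> = (\<Sum>j\<in>UNIV. \<Sum>i\<in>UNIV. g j * (f i * H i j))" by (rule sum.swap)
  also have "\<dots> = (\<Sum>j\<in>UNIV. g j * (\<Sum>i\<in>UNIV. f i * H i j))" by (simp add: sum_distrib_left)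
  finally show ?thesis .
qed

lemma swap_anti:
  fixes f g :: "4 \<Rightarrow> real"
  assumes X: "\<And>i j. X i j = - X j i"
  shows "(\<Sum>i\<in>UNIV. f i * (\<Sum>j\<in>UNIV. g j * X i j)) = - (\<Sum>i\<in>UNIV. g i * (\<Sum>j\<in>UNIV. f j * X i j))"
proof -
  have "(\<Sum>i\<in>UNIV. g i * (\<Sum>j\<in>UNIV. f j * X i j)) = (\<Sum>j\<in>UNIV. f j * (\<Sum>i\<in>UNIV. g i * X i j))"
    by (rule sum_inner)
  also have "\<dots> = (\<Sum>j\<in>UNIV. f j * (\<Sum>i\<in>UNIV. g i * (- X j i)))" by (intro sum.cong refl arg_cong2[where f="(*)"] X)
  also have "\<dots> = - (\<Sum>j\<in>UNIV. f j * (\<Sum>i\<in>UNIV. g i * X j i))" by (simp add: sum_negf)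
  finally show ?thesis by simp
qed

lemma inj_col:
  fixes Q :: "real^4^4"
  assumes dQ: "det Q \<noteq> 0" and z: "\<And>a. (\<Sum>i\<in>UNIV. Q$i$a * f i) = 0"
  shows "f i = 0"
proof -
  define v :: "real^4" where "v = (\<chi> i. f i)"
  have tv: "transpose Q *v v = 0"
    using z by (simp add: vec_eq_iff matrix_vector_mult_def transpose_def v_def del: transpose_matrix_vector)
  have dT: "det (transpose Q) \<noteq> 0" using dQ by simp
  have "matrix_inv (transpose Q) *v (transpose Q *v v) = v"
    by (simp only: matrix_vector_mul_assoc inv_props(2)[OF dT] matrix_vector_mul_lid)
  then have "v = matrix_inv (transpose Q) *v (transpose Q *v v)" by simp
  also have "\<dots> = 0" unfolding \<open>transpose Q *v v = 0\<close> by simp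
  finally show ?thesis by (simp add: v_def vec_eq_iff)
qed


lemma move_in3:
  fixes f A B C :: "4 \<Rightarrow> real"
  shows "(\<Sum>i\<in>UNIV. f i * (\<Sum>j\<in>UNIV. A j * (\<Sum>k\<in>UNIV. B k * (\<Sum>l\<in>UNIV. C l * T i j k l))))
       = (\<Sum>j\<in>UNIV. A j * (\<Sum>k\<in>UNIV. B k * (\<Sum>l\<in>UNIV. C l * (\<Sum>i\<in>UNIV. f i * T i j k l))))"
proof -
  have s3: "\<And>j k. (\<Sum>i\<in>UNIV. f i * (\<Sum>l\<in>UNIV. C l * T i j k l)) = (\<Sum>l\<in>UNIV. C l * (\<Sum>i\<in>UNIV. f i * T i j k l))"
    by (rule sum_inner)
  have s2: "\<And>j. (\<Sum>i\<in>UNIV. f i * (\<Sum>k\<in>UNIV. B k * (\<Sum>l\<in>UNIV. C l * T i j k l)))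
       = (\<Sum>k\<in>UNIV. B k * (\<Sum>i\<in>UNIV. f i * (\<Sum>l\<in>UNIV. C l * T i j k l)))"
    by (rule sum_inner)
  have "(\<Sum>i\<in>UNIV. f i * (\<Sum>j\<in>UNIV. A j * (\<Sum>k\<in>UNIV. B k * (\<Sum>l\<in>UNIV. C l * T i j k l))))
      = (\<Sum>j\<in>UNIV. A j * (\<Sum>i\<in>UNIV. f i * (\<Sum>k\<in>UNIV. B k * (\<Sum>l\<in>UNIV. C l * T i j k l))))"
    by (rule sum_inner)
  also have "\<dots> = (\<Sum>j\<in>UNIV. A j * (\<Sum>k\<in>UNIV. B k * (\<Sum>i\<in>UNIV. f i * (\<Sum>l\<in>UNIV. C l * T i j k l))))"
    by (simp only: s2)
  also have "\<dots> = (\<Sum>j\<in>UNIV. A j * (\<Sum>k\<in>UNIV. B k * (\<Sum>l\<in>UNIV. C l * (\<Sum>i\<in>UNIV. f i * T i j k l))))"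
    by (simp only: s3)
  finally show ?thesis .
qed

lemma trace_move:
  fixes e :: "4 \<Rightarrow> real" and Q :: "real^4^4"
  shows "(\<Sum>a\<in>UNIV. e a * (\<Sum>i\<in>UNIV. Q$i$a * (\<Sum>k\<in>UNIV. Q$k$a * Z i k)))
       = (\<Sum>i\<in>UNIV. \<Sum>k\<in>UNIV. (\<Sum>a\<in>UNIV. Q$i$a * e a * Q$k$a) * Z i k)"
proof -
  have "(\<Sum>a\<in>UNIV. e a * (\<Sum>i\<in>UNIV. Q$i$a * (\<Sum>k\<in>UNIV. Q$k$a * Z i k)))
     = (\<Sum>a\<in>UNIV. \<Sum>i\<in>UNIV. \<Sum>k\<in>UNIV. Q$i$a * e a * Q$k$a * Z i k)"
    by (simp add: sum_distrib_left mult_ac)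
  also have "\<dots> = (\<Sum>i\<in>UNIV. \<Sum>a\<in>UNIV. \<Sum>k\<in>UNIV. Q$i$a * e a * Q$k$a * Z i k)" by (rule sum.swap)
  also have "\<dots> = (\<Sum>i\<in>UNIV. \<Sum>k\<in>UNIV. \<Sum>a\<in>UNIV. Q$i$a * e a * Q$k$a * Z i k)"
    by (rule sum.cong[OF refl], rule sum.swap)
  also have "\<dots> = (\<Sum>i\<in>UNIV. \<Sum>k\<in>UNIV. (\<Sum>a\<in>UNIV. Q$i$a * e a * Q$k$a) * Z i k)"
    by (simp add: sum_distrib_right)
  finally show ?thesis .
qed

lemma move_in2:
  fixes A B :: "4 \<Rightarrow> real"
  shows "(\<Sum>i\<in>UNIV. \<Sum>k\<in>UNIV. c i k * (\<Sum>j\<in>UNIV. A j * (\<Sum>l\<in>UNIV. B l * T i j k l)))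
    = (\<Sum>j\<in>UNIV. A j * (\<Sum>l\<in>UNIV. B l * (\<Sum>i\<in>UNIV. \<Sum>k\<in>UNIV. c i k * T i j k l)))"
proof -
  have "(\<Sum>i\<in>UNIV. \<Sum>k\<in>UNIV. c i k * (\<Sum>j\<in>UNIV. A j * (\<Sum>l\<in>UNIV. B l * T i j k l)))
      = (\<Sum>i\<in>UNIV. \<Sum>k\<in>UNIV. \<Sum>j\<in>UNIV. \<Sum>l\<in>UNIV. A j * (B l * (c i k * T i j k l)))"
    by (simp add: sum_distrib_left mult_ac)
  also have "\<dots> = (\<Sum>i\<in>UNIV. \<Sum>j\<in>UNIV. \<Sum>k\<in>UNIV. \<Sum>l\<in>UNIV. A j * (B l * (c i k * T i j k l)))"
    by (rule sum.cong[OF refl], rule sum.swap)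
  also have "\<dots> = (\<Sum>j\<in>UNIV. \<Sum>i\<in>UNIV. \<Sum>k\<in>UNIV. \<Sum>l\<in>UNIV. A j * (B l * (c i k * T i j k l)))"
    by (rule sum.swap)
  also have "\<dots> = (\<Sum>j\<in>UNIV. \<Sum>i\<in>UNIV. \<Sum>l\<in>UNIV. \<Sum>k\<in>UNIV. A j * (B l * (c i k * T i j k l)))"
    by (rule sum.cong[OF refl], rule sum.cong[OF refl], rule sum.swap)
  also have "\<dots> = (\<Sum>j\<in>UNIV. \<Sum>l\<in>UNIV. \<Sum>i\<in>UNIV. \<Sum>k\<in>UNIV. A j * (B l * (c i k * T i j k l)))"
    by (rule sum.cong[OF refl], rule sum.swap)
  also have "\<dots> = (\<Sum>j\<in>UNIV. A j * (\<Sum>l\<in>UNIV. B l * (\<Sum>i\<in>UNIV. \<Sum>k\<in>UNIV. c i k * T i j k l)))"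
    by (simp add: sum_distrib_left)
  finally show ?thesis .
qed

lemma exhaust0: "(m::4) = 0 \<or> m = 1 \<or> m = 2 \<or> m = 3"
  using UNIV4 by auto

lemma frame_vanish:
  fixes A :: "real^4^4" and uv :: "real^4" and T :: "4 \<Rightarrow> 4 \<Rightarrow> 4 \<Rightarrow> 4 \<Rightarrow> real"
  assumes lor: "lorentzian_matrix A" and un: "(\<Sum>k\<in>UNIV. (A *v uv)$k * uv$k) = -1"
    and Tab: "\<And>a b c d. T a b c d = - T b a c d" and Tcd: "\<And>a b c d. T a b c d = - T a b d c"
    and T4: "\<And>a b c. (\<Sum>d\<in>UNIV. T a b c d * uv$d) = 0"
    and T1: "\<And>b c d. (\<Sum>a\<in>UNIV. uv$a * T a b c d) = 0"
    and Ttr: "\<And>b d. (\<Sum>a\<in>UNIV. \<Sum>c\<in>UNIV. matrix_inv A $ a $ c * T a b c d) = 0"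
  shows "T a b c d = 0"
proof -
  obtain Q s where Q: "transpose Q ** A ** Q = minkowski" "s = 1 \<or> s = -1" "\<And>i. Q$i$0 = s * uv$i"
    using frame_exists[OF lor un] by blast
  have dA: "det A \<noteq> 0" using lor lor_det by blast
  have QiA: "Q ** minkowski ** transpose Q = matrix_inv A" and dQ: "det Q \<noteq> 0"
    using frame_inv[OF dA Q(1)] by auto
  define e :: "4 \<Rightarrow> real" where "e m = (if m = 0 then -1 else 1)" for m
  have Qe: "(Q ** minkowski) $ i $ m = Q$i$m * e m" for i m
    using exhaust0[of m] by (elim disjE) (simp_all add: matrix_matrix_mult_def minkowski_def e_def sum4)
  have gi: "matrix_inv A $ i $ k = (\<Sum>a\<in>UNIV. Q$i$a * e a * Q$k$a)" for i k
  proof -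
    have "matrix_inv A $ i $ k = (Q ** minkowski ** transpose Q) $ i $ k" using QiA by simp
    also have "\<dots> = (\<Sum>a\<in>UNIV. Q$i$a * e a * Q$k$a)"
      by (simp add: matrix_matrix_mult_def[of "Q ** minkowski"] Qe transpose_def)
    finally show ?thesis .
  qed
  define W where "W a b c d = (\<Sum>i\<in>UNIV. Q$i$a * (\<Sum>j\<in>UNIV. Q$j$b * (\<Sum>k\<in>UNIV. Q$k$c * (\<Sum>l\<in>UNIV. Q$l$d * T i j k l))))" for a b c d
  have Wab: "W a b c d = - W b a c d" for a b c d
    unfolding W_def
  proof (rule swap_anti)
    fix i j
    have "\<And>k l. T i j k l = - T j i k l" by (rule Tab)
    then show "(\<Sum>k\<in>UNIV. Q$k$c * (\<Sum>l\<in>UNIV. Q$l$d * T i j k l)) = - (\<Sum>k\<in>UNIV. Q$k$c * (\<Sum>l\<in>UNIV. Q$l$d * T j i k l))"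
      by (simp add: sum_negf)
  qed
  have Wcd: "W a b c d = - W a b d c" for a b c d
  proof -
    have inner: "\<And>i j. (\<Sum>k\<in>UNIV. Q$k$c * (\<Sum>l\<in>UNIV. Q$l$d * T i j k l)) = - (\<Sum>k\<in>UNIV. Q$k$d * (\<Sum>l\<in>UNIV. Q$l$c * T i j k l))"
      by (rule swap_anti) (rule Tcd)
    show ?thesis unfolding W_def inner by (simp add: sum_negf)
  qed
  have W4: "W a b c 0 = 0" for a b c
  proof -
    have "\<And>i j k. (\<Sum>l\<in>UNIV. Q$l$0 * T i j k l) = 0"
    proof -
      fix i j k
      have "(\<Sum>l\<in>UNIV. Q$l$0 * T i j k l) = s * (\<Sum>l\<in>UNIV. T i j k l * uv$l)"
        by (simp add: Q(3) sum_distrib_left mult_ac)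
      then show "(\<Sum>l\<in>UNIV. Q$l$0 * T i j k l) = 0" using T4 by simp
    qed
    then show ?thesis unfolding W_def by simp
  qed
  have W1: "W 0 b c d = 0" for b c d
  proof -
    have "W 0 b c d = (\<Sum>j\<in>UNIV. Q$j$b * (\<Sum>k\<in>UNIV. Q$k$c * (\<Sum>l\<in>UNIV. Q$l$d * (\<Sum>i\<in>UNIV. Q$i$0 * T i j k l))))"
      unfolding W_def by (rule move_in3)
    moreover have "\<And>j k l. (\<Sum>i\<in>UNIV. Q$i$0 * T i j k l) = 0"
    proof -
      fix j k l
      have "(\<Sum>i\<in>UNIV. Q$i$0 * T i j k l) = s * (\<Sum>i\<in>UNIV. uv$i * T i j k l)"
        by (simp add: Q(3) sum_distrib_left mult_ac)
      then show "(\<Sum>i\<in>UNIV. Q$i$0 * T i j k l) = 0" using T1 by simp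
    qed
    ultimately show ?thesis by simp
  qed
  have Wtr: "(\<Sum>a\<in>UNIV. e a * W a b a d) = 0" for b d
  proof -
    have sw: "\<And>a i. (\<Sum>j\<in>UNIV. Q$j$b * (\<Sum>k\<in>UNIV. Q$k$a * (\<Sum>l\<in>UNIV. Q$l$d * T i j k l)))
        = (\<Sum>k\<in>UNIV. Q$k$a * (\<Sum>j\<in>UNIV. Q$j$b * (\<Sum>l\<in>UNIV. Q$l$d * T i j k l)))"
      by (rule sum_inner)
    have "(\<Sum>a\<in>UNIV. e a * W a b a d)
        = (\<Sum>a\<in>UNIV. e a * (\<Sum>i\<in>UNIV. Q$i$a * (\<Sum>k\<in>UNIV. Q$k$a * (\<Sum>j\<in>UNIV. Q$j$b * (\<Sum>l\<in>UNIV. Q$l$d * T i j k l)))))"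
      unfolding W_def sw ..
    also have "\<dots> = (\<Sum>i\<in>UNIV. \<Sum>k\<in>UNIV. (\<Sum>a\<in>UNIV. Q$i$a * e a * Q$k$a) * (\<Sum>j\<in>UNIV. Q$j$b * (\<Sum>l\<in>UNIV. Q$l$d * T i j k l)))"
      by (rule trace_move)
    also have "\<dots> = (\<Sum>i\<in>UNIV. \<Sum>k\<in>UNIV. matrix_inv A $ i $ k * (\<Sum>j\<in>UNIV. Q$j$b * (\<Sum>l\<in>UNIV. Q$l$d * T i j k l)))"
      by (simp add: gi)
    also have "\<dots> = (\<Sum>j\<in>UNIV. Q$j$b * (\<Sum>l\<in>UNIV. Q$l$d * (\<Sum>i\<in>UNIV. \<Sum>k\<in>UNIV. matrix_inv A $ i $ k * T i j k l)))"
      by (rule move_in2)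
    also have "\<dots> = 0" by (simp add: Ttr)
    finally show ?thesis .
  qed
  have tr3: "W 1 b 1 d + W 2 b 2 d + W 3 b 3 d = 0" for b d
    using Wtr[of b d] W1[of b 0 d] by (simp add: sum4 e_def)
  have W0: "W a b c d = 0" for a b c d
    by (rule three_d[OF Wab Wcd W4 W1 tr3])
  have L1: "(\<Sum>j\<in>UNIV. Q$j$b * (\<Sum>k\<in>UNIV. Q$k$c * (\<Sum>l\<in>UNIV. Q$l$d * T i j k l))) = 0" for i b c d
    by (rule inj_col[OF dQ]) (use W0 W_def in auto)
  have L2: "(\<Sum>k\<in>UNIV. Q$k$c * (\<Sum>l\<in>UNIV. Q$l$d * T i j k l)) = 0" for i j c d
    by (rule inj_col[OF dQ]) (rule L1)
  have L3: "(\<Sum>l\<in>UNIV. Q$l$d * T i j k l) = 0" for i j k d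
    by (rule inj_col[OF dQ]) (rule L2)
  show ?thesis by (rule inj_col[OF dQ]) (rule L3)
qed


context lor begin

lemma Rup_cd: "riemann_up G x a b c d = - riemann_up G x a b d c"
  unfolding riemann_up_def by (simp add: sum_subtractf sum_negf algebra_simps)

lemma dchr_sym: "x \<in> U \<Longrightarrow> partial c (\<lambda>y. christoffel G y a d b) x = partial c (\<lambda>y. christoffel G y a b d) x"
proof -
  assume x: "x \<in> U"
  show ?thesis
  proof (rule partial_local[OF openU x])
    fix y assume "y \<in> U"
    then show "christoffel G y a d b = christoffel G y a b d"
      unfolding chr_gam using gam_sym by simp
  qed
qed

lemma chr_sym': "x \<in> U \<Longrightarrow> christoffel G x k i j = christoffel G x k j i"
  unfolding chr_gam using gam_sym by simp

lemma bianchi_up: "x \<in> U \<Longrightarrow> riemann_up G x a b c d + riemann_up G x a c d b + riemann_up G x a d b c = 0"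
proof -
  assume x: "x \<in> U"
  let ?C = "christoffel G x"
  have q: "(\<Sum>e\<in>UNIV. ?C a c e * ?C e d b - ?C a d e * ?C e c b)
         + (\<Sum>e\<in>UNIV. ?C a d e * ?C e b c - ?C a b e * ?C e d c)
         + (\<Sum>e\<in>UNIV. ?C a b e * ?C e c d - ?C a c e * ?C e b d) = 0"
  proof -
    have "\<And>e. ?C e d b = ?C e b d" "\<And>e. ?C e c b = ?C e b c" "\<And>e. ?C e d c = ?C e c d"
      using chr_sym'[OF x] by blast+
    then show ?thesis by (simp add: sum.distrib[symmetric] algebra_simps)
  qed
  show ?thesis
    unfolding riemann_up_def
    using q dchr_sym[OF x, of c a d b] dchr_sym[OF x, of d a b c] dchr_sym[OF x, of b a c d]
    by linarith
qed

end

context tor begin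

lemma point_result:
  assumes x: "x \<in> U"
    and unit: "(\<Sum>k\<in>UNIV. lower G u x k * u x $ k) = -1"
    and E: "\<forall>a d. electric G u x a d = 0"
  shows "weyl G x a b c d = 0"
proof -
  interpret W: walg "\<lambda>i j. G x $ i $ j" "\<lambda>i j. ginv G x i j" "riemann_up G x" "riemann G x" "weyl G x"
    "\<lambda>k. u x $ k" "\<lambda>k. lower G u x k" "\<lambda>a. partial a \<phi> x - (\<phi> x)\<^sup>2 * lower G u x a"
    "ricci G x" "scalar_curv G x"
  proof
    show "\<And>i j. G x $ i $ j = G x $ j $ i" by (rule Gsym[OF x])
    show "\<And>i j. ginv G x i j = ginv G x j i" by (rule ginv_sym[OF x])
    show "\<And>i j. (\<Sum>k\<in>UNIV. G x $ i $ k * ginv G x k j) = (if i = j then 1 else 0)" by (rule G_ginv[OF x])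
    show "\<And>i j. (\<Sum>k\<in>UNIV. ginv G x i k * G x $ k $ j) = (if i = j then 1 else 0)" by (rule ginv_G[OF x])
    show "\<And>a b c d. riemann G x a b c d = (\<Sum>e\<in>UNIV. G x $ a $ e * riemann_up G x e b c d)"
      by (rule riemann_def)
    show "\<And>a b c d. riemann_up G x a b c d = - riemann_up G x a b d c" by (rule Rup_cd)
    show "\<And>a b c d. riemann_up G x a b c d + riemann_up G x a c d b + riemann_up G x a d b c = 0"
      by (rule bianchi_up[OF x])
    show "\<And>a b c d. riemann G x a b c d = - riemann G x b a c d" by (rule riem_antisym1[OF x])
    show "\<And>b d. ricci G x b d = (\<Sum>a\<in>UNIV. riemann_up G x a b a d)" by (rule ricci_def)
    show "scalar_curv G x = (\<Sum>b\<in>UNIV. \<Sum>d\<in>UNIV. ginv G x b d * ricci G x b d)" by (rule scalar_curv_def)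
    show "\<And>a b c d. weyl G x a b c d = riemann G x a b c d
     - (1/2) * (G x $ a $ c * ricci G x b d - G x $ a $ d * ricci G x b c + G x $ b $ d * ricci G x a c - G x $ b $ c * ricci G x a d)
     + (scalar_curv G x / 6) * (G x $ a $ c * G x $ b $ d - G x $ a $ d * G x $ b $ c)"
      by (rule weyl_def)
    show "\<And>k. lower G u x k = (\<Sum>j\<in>UNIV. G x $ k $ j * u x $ j)" by (rule lower_def)
    show "(\<Sum>k\<in>UNIV. lower G u x k * u x $ k) = -1" by (rule unit)
    show "\<And>j a i. (\<Sum>e\<in>UNIV. lower G u x e * riemann_up G x e j a i)
       = - (partial a \<phi> x - (\<phi> x)\<^sup>2 * lower G u x a) * (G x $ i $ j + lower G u x i * lower G u x j)
         + (partial i \<phi> x - (\<phi> x)\<^sup>2 * lower G u x i) * (G x $ a $ j + lower G u x a * lower G u x j)"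
      by (rule Xrel_up[OF x])
  qed
  have E': "\<forall>a d. (\<Sum>b\<in>UNIV. \<Sum>c\<in>UNIV. u x $ b * u x $ c * weyl G x a b c d) = 0"
    using E unfolding electric_def by simp
  have Y: "\<And>a b c. (\<Sum>d\<in>UNIV. weyl G x a b c d * u x $ d) = 0" by (rule W.Y_zero[OF E'])
  have Y1: "\<And>b c d. (\<Sum>a\<in>UNIV. u x $ a * weyl G x a b c d) = 0"
  proof -
    fix b c d
    have "(\<Sum>a\<in>UNIV. u x $ a * weyl G x a b c d) = (\<Sum>a\<in>UNIV. - (weyl G x c d b a * u x $ a))"
    proof (rule sum.cong[OF refl])
      fix a
      have "weyl G x a b c d = weyl G x c d a b" by (rule W.C_pair)
      also have "\<dots> = - weyl G x c d b a" by (rule W.C_cd)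
      finally show "u x $ a * weyl G x a b c d = - (weyl G x c d b a * u x $ a)" by simp
    qed
    also have "\<dots> = 0" using Y[of c d b] by (simp add: sum_negf)
    finally show "(\<Sum>a\<in>UNIV. u x $ a * weyl G x a b c d) = 0" .
  qed
  have un: "(\<Sum>k\<in>UNIV. (G x *v u x) $ k * u x $ k) = -1"
    using unit by (simp add: matrix_vector_mult_def lower_def)
  show ?thesis
  proof (rule frame_vanish[OF Glor[OF x] un])
    show "\<And>a b c d. weyl G x a b c d = - weyl G x b a c d" by (rule W.C_ab)
    show "\<And>a b c d. weyl G x a b c d = - weyl G x a b d c" by (rule W.C_cd)
    show "\<And>a b c. (\<Sum>d\<in>UNIV. weyl G x a b c d * u x $ d) = 0" by (rule Y)
    show "\<And>b c d. (\<Sum>a\<in>UNIV. u x $ a * weyl G x a b c d) = 0" by (rule Y1)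
    show "\<And>b d. (\<Sum>a\<in>UNIV. \<Sum>c\<in>UNIV. matrix_inv (G x) $ a $ c * weyl G x a b c d) = 0"
      using W.C_trace unfolding ginv_def by simp
  qed
qed

end

theorem corollary3p2:
  fixes U :: "(real^4) set"
    and G :: "real^4 \<Rightarrow> real^4^4"
    and u :: "real^4 \<Rightarrow> real^4"
    and \<phi> :: "real^4 \<Rightarrow> real"
  assumes metric: "lorentzian_metric U G"
    and u_smooth: "\<forall>k. smooth_on U (\<lambda>x. u x $ k)"
    and phi_smooth: "smooth_on U \<phi>"
    and u_unit: "\<forall>x\<in>U. (\<Sum>k\<in>UNIV. lower G u x k * u x $ k) = -1"
    and torse: "\<forall>x\<in>U. \<forall>i j. cov_deriv_form G u x i j
                    = \<phi> x * (G x $ i $ j + lower G u x i * lower G u x j)"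
  shows "(\<forall>x\<in>U. \<forall>a b c d. weyl G x a b c d = 0) \<longleftrightarrow>
         (\<forall>x\<in>U. \<forall>a d. electric G u x a d = 0)"
proof
  assume "\<forall>x\<in>U. \<forall>a b c d. weyl G x a b c d = 0"
  then show "\<forall>x\<in>U. \<forall>a d. electric G u x a d = 0" unfolding electric_def by simp
next
  assume E: "\<forall>x\<in>U. \<forall>a d. electric G u x a d = 0"
  interpret tor U G u \<phi>
    by unfold_locales (fact metric u_smooth phi_smooth torse)+
  show "\<forall>x\<in>U. \<forall>a b c d. weyl G x a b c d = 0"
    using point_result u_unit E by blast
qed


end
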